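(* Let $I$ be an ideal in a Noetherian ring $A$ containing a regular element (non-zero-divisor) of $A$, and let $\tilde{I}=\bigcup_{n\ge0}(I^{n+1}:I^n)$ be the Ratliff–Rush ideal associated with $I$. Then $\tilde{I}\subset{}^*I$.
   Context: For an ideal $I$ of $A$, an element $b\in A$ is weakly subintegral over $I$ if there exist $q\in\mathbb{N}$ and elements $a_i\in I^i$ ($1\le i\le 2q+1$) such that $b^n+\sum_{i=1}^n\binom{n}{i}a_ib^{n-i}=0$ for all $n$ with $q+1\le n\le 2q+1$. The weak subintegral closure ${}^*I$ of $I$ is the set of elements of $A$ weakly subintegral over $I$. *)

theory Defs
  imports "HOL-Algebra.Algebra" "HOL-Algebra.Ideal_Product" "HOL-Algebra.Ring_Divisibility"
begin

primrec ideal_pow :: "('a, 'b) ring_scheme \<Rightarrow> 'a set \<Rightarrow> nat \<Rightarrow> 'a set" where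
  "ideal_pow R I 0 = carrier R"
| "ideal_pow R I (Suc n) = ideal_prod R I (ideal_pow R I n)"

definition regular_elem :: "('a, 'b) ring_scheme \<Rightarrow> 'a \<Rightarrow> bool" where
  "regular_elem R x \<longleftrightarrow> x \<in> carrier R \<and>
     (\<forall>y \<in> carrier R. x \<otimes>\<^bsub>R\<^esub> y = \<zero>\<^bsub>R\<^esub> \<longrightarrow> y = \<zero>\<^bsub>R\<^esub>)"

definition ratliff_rush :: "('a, 'b) ring_scheme \<Rightarrow> 'a set \<Rightarrow> 'a set" where
  "ratliff_rush R I = (\<Union>n. {x \<in> carrier R.
      \<forall>y \<in> ideal_pow R I n. x \<otimes>\<^bsub>R\<^esub> y \<in> ideal_pow R I (Suc n)})"

definition weakly_subintegral :: "('a, 'b) ring_scheme \<Rightarrow> 'a set \<Rightarrow> 'a \<Rightarrow> bool" where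
  "weakly_subintegral R I b \<longleftrightarrow> b \<in> carrier R \<and>
     (\<exists>(q::nat) (a::nat \<Rightarrow> 'a).
        (\<forall>i \<in> {1..2*q+1}. a i \<in> ideal_pow R I i) \<and>
        (\<forall>n \<in> {q+1..2*q+1}.
           b [^]\<^bsub>R\<^esub> n \<oplus>\<^bsub>R\<^esub>
             (\<Oplus>\<^bsub>R\<^esub> i \<in> {1..n}. [(n choose i)] \<cdot>\<^bsub>R\<^esub> (a i \<otimes>\<^bsub>R\<^esub> b [^]\<^bsub>R\<^esub> (n - i)))
           = \<zero>\<^bsub>R\<^esub>))"

definition weak_subintegral_closure :: "('a, 'b) ring_scheme \<Rightarrow> 'a set \<Rightarrow> 'a set" where
  "weak_subintegral_closure R I = {b \<in> carrier R. weakly_subintegral R I b}"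

end

theory Submission
  imports Defs "HOL-Library.List_Lexorder"
begin

locale ncring = cring R + noetherian_ring R for R (structure)

context cring
begin

lemma ideal_pow_ideal:
  assumes "ideal I R" shows "ideal (ideal_pow R I n) R"
  by (induction n) (auto simp: assms oneideal ideal_prod_is_ideal)

lemma ideal_pow_carr:
  assumes "ideal I R" shows "ideal_pow R I n \<subseteq> carrier R"
  by (rule additive_subgroup.a_subset[OF ideal.axioms(1)[OF ideal_pow_ideal[OF assms]]])

lemma ideal_pow_mult:
  assumes I: "ideal I R" and "a \<in> ideal_pow R I j" "b \<in> ideal_pow R I k"
  shows "a \<otimes> b \<in> ideal_pow R I (j + k)"
  using assms(2,3)
proof (induction j arbitrary: a)
  case 0
  then show ?case using ideal.I_l_closed[OF ideal_pow_ideal[OF I]] by simp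
next
  case (Suc j)
  from Suc.prems(1) have "a \<in> ideal_prod R I (ideal_pow R I j)" by simp
  then show ?case
  proof (induction a rule: ideal_prod.induct)
    case (prod i a')
    have ic: "i \<in> carrier R" using ideal.Icarr[OF I prod(1)] .
    have ac: "a' \<in> carrier R" using prod(2) ideal_pow_carr[OF I] by blast
    have bc: "b \<in> carrier R" using Suc.prems(2) ideal_pow_carr[OF I] by blast
    have "a' \<otimes> b \<in> ideal_pow R I (j + k)" using Suc.IH[OF prod(2) Suc.prems(2)] .
    hence "i \<otimes> (a' \<otimes> b) \<in> ideal_pow R I (Suc (j + k))"
      using ideal_prod.prod[OF prod(1)] by simp
    then show ?case using ic ac bc by (simp add: m_assoc)
  next
    case (sum s1 s2)
    have c1: "s1 \<in> carrier R" "s2 \<in> carrier R"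
      using sum.hyps(1,2) ideal_prod_in_carrier[OF I ideal_pow_ideal[OF I]] by auto
    have bc: "b \<in> carrier R" using Suc.prems(2) ideal_pow_carr[OF I] by blast
    have "s1 \<otimes> b \<oplus> s2 \<otimes> b \<in> ideal_pow R I (Suc j + k)"
      by (rule additive_subgroup.a_closed[OF ideal.axioms(1)[OF ideal_pow_ideal[OF I]] sum.IH(1) sum.IH(2)])
    then show ?case using c1 bc by (simp add: l_distr)
  qed
qed

lemma ideal_pow_anti0:
  assumes I: "ideal I R" shows "ideal_pow R I (d + j) \<subseteq> ideal_pow R I j"
proof (induction d)
  case 0 then show ?case by simp
next
  case (Suc d)
  have "ideal_pow R I (Suc d + j) \<subseteq> ideal_pow R I (d + j)"
    using ideal_prod_inter[OF I ideal_pow_ideal[OF I, of "d + j"]] by simp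
  then show ?case using Suc.IH by (rule order_trans)
qed

lemma ideal_pow_anti:
  assumes I: "ideal I R" and "j \<le> k" shows "ideal_pow R I k \<subseteq> ideal_pow R I j"
  using ideal_pow_anti0[OF I, of "k - j" j] assms(2) by simp

lemma ideal_pow_one: assumes "ideal I R" shows "ideal_pow R I 1 = I"
  using ideal_prod_one[OF assms] by simp

end

context noetherian_ring
begin

lemma nat_chain_stable:
  assumes "\<And>k. ideal (L k) R" "\<And>k. L k \<subseteq> L (Suc k)"
  shows "\<exists>K. \<forall>k. L k \<subseteq> L K"
proof -
  have mono: "L i \<subseteq> L j" if "i \<le> j" for i j
    using lift_Suc_mono_le[of L, OF assms(2) that] .
  have ch: "subset.chain {I. ideal I R} (range L)"
    unfolding subset_chain_def
  proof (intro conjI ballI)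
    show "range L \<subseteq> {I. ideal I R}" using assms(1) by auto
    fix x y assume "x \<in> range L" "y \<in> range L"
    then obtain i j where xy: "x = L i" "y = L j" by auto
    show "x \<subseteq> y \<or> y \<subseteq> x"
    proof (cases "i \<le> j")
      case True then show ?thesis using mono[OF True] xy by blast
    next
      case False then have "j \<le> i" by simp
      then show ?thesis using mono[of j i] xy by blast
    qed
  qed
  have "\<Union>(range L) \<in> range L"
    by (rule ideal_chain_is_trivial) (use ch in auto)
  then obtain K where "\<Union>(range L) = L K" by auto
  thus ?thesis by blast
qed

lemma dickson_acc:
  "\<forall>L :: nat list \<Rightarrow> 'a set. (\<forall>\<beta>. length \<beta> = r \<longrightarrow> ideal (L \<beta>) R) \<longrightarrow>
       (\<forall>\<alpha> \<beta>. length \<alpha> = r \<longrightarrow> length \<beta> = r \<longrightarrow> list_all2 (\<le>) \<alpha> \<beta> \<longrightarrow> L \<alpha> \<subseteq> L \<beta>) \<longrightarrow>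
       (\<exists>F. finite F \<and> (\<forall>\<gamma>\<in>F. length \<gamma> = r) \<and>
          (\<forall>\<beta>. length \<beta> = r \<longrightarrow> L \<beta> \<subseteq> Idl (\<Union>{L \<gamma> |\<gamma>. \<gamma> \<in> F \<and> list_all2 (\<le>) \<gamma> \<beta>})))"
proof (induction r)
  case 0
  show ?case
  proof (intro allI impI)
    fix L :: "nat list \<Rightarrow> 'a set"
    assume id: "\<forall>\<beta>. length \<beta> = 0 \<longrightarrow> ideal (L \<beta>) R"
      and "\<forall>\<alpha> \<beta>. length \<alpha> = 0 \<longrightarrow> length \<beta> = 0 \<longrightarrow> list_all2 (\<le>) \<alpha> \<beta> \<longrightarrow> L \<alpha> \<subseteq> L \<beta>"
    have u: "\<Union>{L \<gamma> |\<gamma>. \<gamma> \<in> {[]} \<and> list_all2 (\<le>) \<gamma> []} = L []" by auto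
    have "L [] \<subseteq> carrier R" using id additive_subgroup.a_subset[OF ideal.axioms(1)] by simp
    hence l: "L [] \<subseteq> Idl (\<Union>{L \<gamma> |\<gamma>. \<gamma> \<in> {[]} \<and> list_all2 (\<le>) \<gamma> []})"
      unfolding u by (rule genideal_self)
    show "\<exists>F. finite F \<and> (\<forall>\<gamma>\<in>F. length \<gamma> = 0) \<and>
          (\<forall>\<beta>. length \<beta> = 0 \<longrightarrow> L \<beta> \<subseteq> Idl (\<Union>{L \<gamma> |\<gamma>. \<gamma> \<in> F \<and> list_all2 (\<le>) \<gamma> \<beta>}))"
      (is "?thesis")
    proof -
      have "\<forall>\<beta>::nat list. length \<beta> = 0 \<longrightarrow> L \<beta> \<subseteq> Idl (\<Union>{L \<gamma> |\<gamma>. \<gamma> \<in> {[]} \<and> list_all2 (\<le>) \<gamma> \<beta>})"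
        using l by simp
      then show ?thesis by (intro exI[of _ "{[]}"]) simp
    qed
  qed
next
  case (Suc r)
  show ?case
  proof (intro allI impI)
    fix L :: "nat list \<Rightarrow> 'a set"
    assume id: "\<forall>\<beta>. length \<beta> = Suc r \<longrightarrow> ideal (L \<beta>) R"
      and mo: "\<forall>\<alpha> \<beta>. length \<alpha> = Suc r \<longrightarrow> length \<beta> = Suc r \<longrightarrow> list_all2 (\<le>) \<alpha> \<beta> \<longrightarrow> L \<alpha> \<subseteq> L \<beta>"
    have carrU: "\<Union>S \<subseteq> carrier R" if prem: "\<And>Y. Y \<in> S \<Longrightarrow> \<exists>\<gamma>. Y = L \<gamma> \<and> length \<gamma> = Suc r" for S
    proof
      fix z assume "z \<in> \<Union>S"
      then obtain Y where Y: "Y \<in> S" "z \<in> Y" by blast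
      then obtain \<gamma> where g: "Y = L \<gamma>" "length \<gamma> = Suc r" using prem[OF Y(1)] by blast
      then have "ideal Y R" using id by simp
      then show "z \<in> carrier R" using Y(2) by (rule ideal.Icarr)
    qed
    have "\<forall>\<beta>'. \<exists>K. length \<beta>' = r \<longrightarrow> (\<forall>k. L (k # \<beta>') \<subseteq> L (K # \<beta>'))"
    proof
      fix \<beta>' :: "nat list"
      show "\<exists>K. length \<beta>' = r \<longrightarrow> (\<forall>k. L (k # \<beta>') \<subseteq> L (K # \<beta>'))"
      proof (cases "length \<beta>' = r")
        case True
        have "\<exists>K. \<forall>k. L (k # \<beta>') \<subseteq> L (K # \<beta>')"
          apply (rule nat_chain_stable[of "\<lambda>k. L (k # \<beta>')"])
          using id True apply simp
          using mo True by (simp add: list_all2_refl)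
        then show ?thesis by blast
      qed auto
    qed
    from choice[OF this] obtain Kf where Kf0: "\<forall>\<beta>'. length \<beta>' = r \<longrightarrow> (\<forall>k. L (k # \<beta>') \<subseteq> L (Kf \<beta>' # \<beta>'))"
      by blast
    have Kf: "\<And>\<beta>' k. length \<beta>' = r \<Longrightarrow> L (k # \<beta>') \<subseteq> L (Kf \<beta>' # \<beta>')"
      using Kf0 by blast
    define U where "U \<beta>' = L (Kf \<beta>' # \<beta>')" for \<beta>'
    have "\<exists>F. finite F \<and> (\<forall>\<gamma>\<in>F. length \<gamma> = r) \<and>
          (\<forall>\<beta>. length \<beta> = r \<longrightarrow> U \<beta> \<subseteq> Idl (\<Union>{U \<gamma> |\<gamma>. \<gamma> \<in> F \<and> list_all2 (\<le>) \<gamma> \<beta>}))"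
    proof (rule Suc.IH[rule_format])
      show "ideal (U \<beta>) R" if "length \<beta> = r" for \<beta> using id that by (simp add: U_def)
      show "U \<alpha> \<subseteq> U \<beta>" if "length \<alpha> = r" "length \<beta> = r" "list_all2 (\<le>) \<alpha> \<beta>" for \<alpha> \<beta>
      proof -
        have "L (Kf \<alpha> # \<alpha>) \<subseteq> L (Kf \<alpha> # \<beta>)" using mo that by auto
        also have "\<dots> \<subseteq> L (Kf \<beta> # \<beta>)" using Kf that by auto
        finally show ?thesis by (simp add: U_def)
      qed
    qed
    then obtain Fi where Fi: "finite Fi" "\<forall>\<gamma>\<in>Fi. length \<gamma> = r"
      "\<And>\<beta>. length \<beta> = r \<Longrightarrow> U \<beta> \<subseteq> Idl (\<Union>{U \<gamma> |\<gamma>. \<gamma> \<in> Fi \<and> list_all2 (\<le>) \<gamma> \<beta>})"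
      by blast
    have "\<forall>k. \<exists>F. finite F \<and> (\<forall>\<gamma>\<in>F. length \<gamma> = r) \<and>
          (\<forall>\<beta>. length \<beta> = r \<longrightarrow> L (k # \<beta>) \<subseteq> Idl (\<Union>{L (k # \<gamma>) |\<gamma>. \<gamma> \<in> F \<and> list_all2 (\<le>) \<gamma> \<beta>}))"
    proof
      fix k
      show "\<exists>F. finite F \<and> (\<forall>\<gamma>\<in>F. length \<gamma> = r) \<and>
          (\<forall>\<beta>. length \<beta> = r \<longrightarrow> L (k # \<beta>) \<subseteq> Idl (\<Union>{L (k # \<gamma>) |\<gamma>. \<gamma> \<in> F \<and> list_all2 (\<le>) \<gamma> \<beta>}))"
        apply (rule Suc.IH[rule_format])
        using id apply simp
        using mo by simp
    qed
    from choice[OF this] obtain Fs where Fs0: "\<forall>k. finite (Fs k) \<and> (\<forall>\<gamma>\<in>Fs k. length \<gamma> = r) \<and>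
          (\<forall>\<beta>. length \<beta> = r \<longrightarrow> L (k # \<beta>) \<subseteq> Idl (\<Union>{L (k # \<gamma>) |\<gamma>. \<gamma> \<in> Fs k \<and> list_all2 (\<le>) \<gamma> \<beta>}))"
      by blast
    have Fs: "\<And>k. finite (Fs k)" "\<And>k. \<forall>\<gamma>\<in>Fs k. length \<gamma> = r"
      "\<And>k \<beta>. length \<beta> = r \<Longrightarrow> L (k # \<beta>) \<subseteq> Idl (\<Union>{L (k # \<gamma>) |\<gamma>. \<gamma> \<in> Fs k \<and> list_all2 (\<le>) \<gamma> \<beta>})"
      using Fs0 by blast+
    define K where "K = Max (insert 0 (Kf ` Fi))"
    have KfK: "Kf \<gamma> \<le> K" if "\<gamma> \<in> Fi" for \<gamma>
      unfolding K_def using Fi(1) that by auto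
    define F where "F = (\<lambda>\<gamma>. K # \<gamma>) ` Fi \<union> (\<Union>k<K. (\<lambda>\<gamma>. k # \<gamma>) ` Fs k)"
    show "\<exists>F. finite F \<and> (\<forall>\<gamma>\<in>F. length \<gamma> = Suc r) \<and>
          (\<forall>\<beta>. length \<beta> = Suc r \<longrightarrow> L \<beta> \<subseteq> Idl (\<Union>{L \<gamma> |\<gamma>. \<gamma> \<in> F \<and> list_all2 (\<le>) \<gamma> \<beta>}))"
    proof (intro exI[of _ F] conjI allI impI)
      show "finite F" unfolding F_def using Fi(1) Fs(1) by auto
      show "\<forall>\<gamma>\<in>F. length \<gamma> = Suc r" unfolding F_def using Fi(2) Fs(2) by auto
      fix \<beta> :: "nat list" assume lb: "length \<beta> = Suc r"
      then obtain k \<beta>' where b: "\<beta> = k # \<beta>'" and lb': "length \<beta>' = r"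
        by (cases \<beta>) auto
      let ?T = "\<Union>{L \<gamma> |\<gamma>. \<gamma> \<in> F \<and> list_all2 (\<le>) \<gamma> \<beta>}"
      have Tc: "?T \<subseteq> carrier R"
        by (rule carrU) (auto simp: F_def Fi(2) Fs(2))
      show "L \<beta> \<subseteq> Idl ?T"
      proof (cases "K \<le> k")
        case True
        have "L \<beta> \<subseteq> U \<beta>'" using Kf lb' b U_def by auto
        also have "\<dots> \<subseteq> Idl (\<Union>{U \<gamma> |\<gamma>. \<gamma> \<in> Fi \<and> list_all2 (\<le>) \<gamma> \<beta>'})" using Fi(3) lb' by blast
        also have "\<dots> \<subseteq> Idl ?T"
        proof (rule subset_Idl_subset[OF Tc])
          show "\<Union>{U \<gamma> |\<gamma>. \<gamma> \<in> Fi \<and> list_all2 (\<le>) \<gamma> \<beta>'} \<subseteq> ?T"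
          proof
            fix z assume "z \<in> \<Union>{U \<gamma> |\<gamma>. \<gamma> \<in> Fi \<and> list_all2 (\<le>) \<gamma> \<beta>'}"
            then obtain \<gamma> where g: "\<gamma> \<in> Fi" "list_all2 (\<le>) \<gamma> \<beta>'" "z \<in> U \<gamma>" by auto
            have lg: "length \<gamma> = r" using Fi(2) g by auto
            have "U \<gamma> \<subseteq> L (K # \<gamma>)"
              unfolding U_def using mo lg KfK[OF g(1)] by (auto simp: list_all2_refl)
            moreover have "K # \<gamma> \<in> F" using g unfolding F_def by auto
            moreover have "list_all2 (\<le>) (K # \<gamma>) \<beta>" using g True b by auto
            ultimately show "z \<in> ?T" using g(3) by blast
          qed
        qed
        finally show ?thesis .
      next
        case False
        have "L \<beta> \<subseteq> Idl (\<Union>{L (k # \<gamma>) |\<gamma>. \<gamma> \<in> Fs k \<and> list_all2 (\<le>) \<gamma> \<beta>'})"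
          using Fs(3) lb' b by blast
        also have "\<dots> \<subseteq> Idl ?T"
        proof (rule subset_Idl_subset[OF Tc])
          show "\<Union>{L (k # \<gamma>) |\<gamma>. \<gamma> \<in> Fs k \<and> list_all2 (\<le>) \<gamma> \<beta>'} \<subseteq> ?T"
          proof
            fix z assume "z \<in> \<Union>{L (k # \<gamma>) |\<gamma>. \<gamma> \<in> Fs k \<and> list_all2 (\<le>) \<gamma> \<beta>'}"
            then obtain \<gamma> where g: "\<gamma> \<in> Fs k" "list_all2 (\<le>) \<gamma> \<beta>'" "z \<in> L (k # \<gamma>)" by auto
            have "k # \<gamma> \<in> F" using g False unfolding F_def by auto
            moreover have "list_all2 (\<le>) (k # \<gamma>) \<beta>" using g b by auto
            ultimately show "z \<in> ?T" using g(3) by blast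
          qed
        qed
        finally show ?thesis .
      qed
    qed
  qed
qed

end

definition Dg :: "nat \<Rightarrow> nat \<Rightarrow> nat list set" where
  "Dg r n = {\<alpha>. length \<alpha> = r \<and> sum_list \<alpha> = n}"

lemma finite_Dg: "finite (Dg r n)"
proof -
  have "Dg r n \<subseteq> {xs. set xs \<subseteq> {0..n} \<and> length xs = r}"
    unfolding Dg_def using member_le_sum_list by fastforce
  moreover have "finite {xs. set xs \<subseteq> {0..n} \<and> length xs = r}"
    by (rule finite_lists_length_eq) simp
  ultimately show ?thesis by (rule finite_subset)
qed

lemma sum_list_map2_add:
  "length a = length d \<Longrightarrow> sum_list (map2 (+) a d) = sum_list a + (sum_list d :: nat)"
  by (induction a d rule: list_induct2) auto

lemma le_map2_add: "length a = length d \<Longrightarrow> list_all2 (\<le>) d (map2 (+) a (d::nat list))"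
  by (induction a d rule: list_induct2) auto

lemma map2_sub_add: "length a = length d \<Longrightarrow> map2 (-) (map2 (+) a d) d = (a::nat list)"
  by (induction a d rule: list_induct2) auto

lemma map2_add_sub: "list_all2 (\<le>) d b \<Longrightarrow> map2 (+) (map2 (-) b d) d = (b::nat list)"
  by (induction d b rule: list_all2_induct) auto

lemma length_map2_sub: "list_all2 (\<le>) d b \<Longrightarrow> length (map2 (-) b (d::nat list)) = length b"
  by (induction d b rule: list_all2_induct) auto

lemma sum_list_le_pw: "list_all2 (\<le>) d b \<Longrightarrow> sum_list d \<le> (sum_list b :: nat)"
  by (induction d b rule: list_all2_induct) auto

lemma sum_list_map2_sub: "list_all2 (\<le>) d b \<Longrightarrow> sum_list (map2 (-) b d) = sum_list b - (sum_list d :: nat)"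
proof (induction d b rule: list_all2_induct)
  case (Cons x xs y ys)
  then have "sum_list xs \<le> sum_list ys" using sum_list_le_pw by blast
  then show ?case using Cons by simp
qed simp

lemma lex_map2_add:
  "length a = length d \<Longrightarrow> length b = length d \<Longrightarrow>
   (map2 (+) a d < map2 (+) b d) \<longleftrightarrow> a < (b::nat list)"
proof (induction a d arbitrary: b rule: list_induct2)
  case Nil then show ?case by (simp add: list_less_def)
next
  case (Cons x xs y ys)
  then obtain z zs where b: "b = z # zs" "length zs = length ys" by (cases b) auto
  have "(map2 (+) (x # xs) (y # ys) < map2 (+) b (y # ys)) \<longleftrightarrow>
        (x + y < z + y \<or> x + y = z + y \<and> map2 (+) xs ys < map2 (+) zs ys)"
    using b by (simp add: list_less_def)
  also have "\<dots> \<longleftrightarrow> (x < z \<or> x = z \<and> xs < zs)" using Cons.IH[OF b(2)] by auto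
  also have "\<dots> \<longleftrightarrow> x # xs < b" using b by (simp add: list_less_def)
  finally show ?case .
qed

lemma add_in_Dg: "\<alpha> \<in> Dg r n \<Longrightarrow> length \<delta> = r \<Longrightarrow> map2 (+) \<alpha> \<delta> \<in> Dg r (n + sum_list \<delta>)"
  unfolding Dg_def by (auto simp: sum_list_map2_add)

lemma sub_in_Dg: "\<beta> \<in> Dg r m \<Longrightarrow> list_all2 (\<le>) \<delta> \<beta> \<Longrightarrow> map2 (-) \<beta> \<delta> \<in> Dg r (m - sum_list \<delta>)"
  unfolding Dg_def using length_map2_sub[of \<delta> \<beta>] sum_list_map2_sub[of \<delta> \<beta>] by auto


fun mnm :: "('a, 'b) ring_scheme \<Rightarrow> 'a list \<Rightarrow> nat list \<Rightarrow> 'a" where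
  "mnm R (g # gs) (a # as) = g [^]\<^bsub>R\<^esub> a \<otimes>\<^bsub>R\<^esub> mnm R gs as"
| "mnm R [] _ = \<one>\<^bsub>R\<^esub>"
| "mnm R (g # gs) [] = \<one>\<^bsub>R\<^esub>"

definition ev :: "('a, 'b) ring_scheme \<Rightarrow> 'a list \<Rightarrow> nat \<Rightarrow> (nat list \<Rightarrow> 'a) \<Rightarrow> 'a" where
  "ev R gs n f = (\<Oplus>\<^bsub>R\<^esub> \<alpha> \<in> Dg (length gs) n. f \<alpha> \<otimes>\<^bsub>R\<^esub> mnm R gs \<alpha>)"

definition sh :: "('a, 'b) ring_scheme \<Rightarrow> nat list \<Rightarrow> (nat list \<Rightarrow> 'a) \<Rightarrow> nat list \<Rightarrow> 'a" where
  "sh R \<delta> f \<beta> = (if list_all2 (\<le>) \<delta> \<beta> then f (map2 (-) \<beta> \<delta>) else \<zero>\<^bsub>R\<^esub>)"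

context cring
begin

lemma mnm_carr: "set gs \<subseteq> carrier R \<Longrightarrow> mnm R gs \<alpha> \<in> carrier R"
proof (induction gs arbitrary: \<alpha>)
  case Nil then show ?case by simp
next
  case (Cons g gs) then show ?case by (cases \<alpha>) auto
qed

lemma mnm_add:
  assumes "set gs \<subseteq> carrier R" "length \<alpha> = length gs" "length \<delta> = length gs"
  shows "mnm R gs (map2 (+) \<alpha> \<delta>) = mnm R gs \<alpha> \<otimes> mnm R gs \<delta>"
proof -
  have "length gs = length \<alpha>" "length \<alpha> = length \<delta>" using assms by auto
  then show ?thesis using assms(1)
proof (induction gs \<alpha> \<delta> rule: list_induct3)
  case Nil then show ?case by simp
next
  case (Cons g gs a \<alpha> d \<delta>)
  have g: "g \<in> carrier R" and gs: "set gs \<subseteq> carrier R" using Cons.prems by auto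
  have "mnm R (g # gs) (map2 (+) (a # \<alpha>) (d # \<delta>)) = g [^] (a + d) \<otimes> (mnm R gs \<alpha> \<otimes> mnm R gs \<delta>)"
    using Cons.IH[OF gs] by simp
  also have "\<dots> = (g [^] a \<otimes> mnm R gs \<alpha>) \<otimes> (g [^] d \<otimes> mnm R gs \<delta>)"
    using g mnm_carr[OF gs] by (simp add: nat_pow_mult[symmetric] m_ac)
  finally show ?case by simp
qed
qed

lemma pow_in_ideal_pow:
  assumes I: "ideal I R" and g: "g \<in> I" shows "g [^] (n::nat) \<in> ideal_pow R I n"
proof (induction n)
  case 0 then show ?case by simp
next
  case (Suc n)
  have gc: "g \<in> carrier R" using ideal.Icarr[OF I g] .
  have "g \<otimes> g [^] n \<in> ideal_pow R I (Suc n)"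
    using ideal_prod.prod[OF g Suc.IH] by simp
  moreover have "g [^] Suc n = g \<otimes> g [^] n" using gc by (simp add: m_comm)
  ultimately show ?case by simp
qed

lemma mnm_in_ideal_pow:
  assumes I: "ideal I R" and "set gs \<subseteq> I" "length \<alpha> = length gs"
  shows "mnm R gs \<alpha> \<in> ideal_pow R I (sum_list \<alpha>)"
proof -
  have "length gs = length \<alpha>" using assms by auto
  then show ?thesis using assms(2)
proof (induction gs \<alpha> rule: list_induct2)
  case Nil then show ?case by simp
next
  case (Cons g gs a \<alpha>)
  have "g [^] a \<otimes> mnm R gs \<alpha> \<in> ideal_pow R I (a + sum_list \<alpha>)"
    by (rule ideal_pow_mult[OF I pow_in_ideal_pow[OF I]]) (use Cons in auto)
  then show ?case by simp
qed
qed

lemma ideal_criterion: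
  assumes "Xs \<subseteq> carrier R" "\<zero> \<in> Xs" "\<And>a b. a \<in> Xs \<Longrightarrow> b \<in> Xs \<Longrightarrow> a \<oplus> b \<in> Xs"
    "\<And>a x. a \<in> Xs \<Longrightarrow> x \<in> carrier R \<Longrightarrow> x \<otimes> a \<in> Xs"
  shows "ideal Xs R"
proof (rule idealI)
  show "ring R" by (rule ring_axioms)
  show "subgroup Xs (add_monoid R)"
  proof
    show "Xs \<subseteq> carrier (add_monoid R)" using assms(1) by simp
    show "\<one>\<^bsub>add_monoid R\<^esub> \<in> Xs" using assms(2) by simp
    show "x \<otimes>\<^bsub>add_monoid R\<^esub> y \<in> Xs" if "x \<in> Xs" "y \<in> Xs" for x y using assms(3) that by simp
    show "inv\<^bsub>add_monoid R\<^esub> x \<in> Xs" if x: "x \<in> Xs" for x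
    proof -
      have xc: "x \<in> carrier R" using assms(1) x by blast
      have "(\<ominus> \<one>) \<otimes> x \<in> Xs" using assms(4)[OF x] by simp
      moreover have "(\<ominus> \<one>) \<otimes> x = \<ominus> x" using xc by (simp add: l_minus)
      ultimately show ?thesis using xc by (simp add: a_inv_def)
    qed
  qed
  show "x \<otimes> a \<in> Xs" if "a \<in> Xs" "x \<in> carrier R" for a x using assms(4) that .
  show "a \<otimes> x \<in> Xs" if "a \<in> Xs" "x \<in> carrier R" for a x
    using assms(4)[OF that] assms(1) that by (simp add: m_comm subset_iff)
qed

end

context cring
begin

lemma ev_carr:
  assumes gs: "set gs \<subseteq> carrier R" and f: "f \<in> Dg (length gs) n \<rightarrow> carrier R"
  shows "ev R gs n f \<in> carrier R"
  unfolding ev_def using f mnm_carr[OF gs] by (intro finsum_closed) auto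

lemma ev_cong:
  assumes gs: "set gs \<subseteq> carrier R" and g: "g \<in> Dg (length gs) n \<rightarrow> carrier R"
    and "\<And>\<alpha>. \<alpha> \<in> Dg (length gs) n \<Longrightarrow> f \<alpha> = g \<alpha>"
  shows "ev R gs n f = ev R gs n g"
  unfolding ev_def by (rule add.finprod_cong') (use assms mnm_carr[OF gs] in \<open>auto simp: Pi_iff\<close>)

lemma ev_add:
  assumes gs: "set gs \<subseteq> carrier R" and f: "f \<in> Dg (length gs) n \<rightarrow> carrier R"
    and g: "g \<in> Dg (length gs) n \<rightarrow> carrier R"
  shows "ev R gs n (\<lambda>\<alpha>. f \<alpha> \<oplus> g \<alpha>) = ev R gs n f \<oplus> ev R gs n g"
proof -
  have "ev R gs n (\<lambda>\<alpha>. f \<alpha> \<oplus> g \<alpha>) =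
        (\<Oplus>\<alpha> \<in> Dg (length gs) n. f \<alpha> \<otimes> mnm R gs \<alpha> \<oplus> g \<alpha> \<otimes> mnm R gs \<alpha>)"
    unfolding ev_def
    by (rule add.finprod_cong') (use f g mnm_carr[OF gs] in \<open>auto simp: l_distr Pi_iff\<close>)
  also have "\<dots> = ev R gs n f \<oplus> ev R gs n g"
    unfolding ev_def
    by (rule finsum_addf) (use f g mnm_carr[OF gs] in auto)
  finally show ?thesis .
qed

lemma ev_scal:
  assumes gs: "set gs \<subseteq> carrier R" and f: "f \<in> Dg (length gs) n \<rightarrow> carrier R"
    and c: "c \<in> carrier R"
  shows "ev R gs n (\<lambda>\<alpha>. c \<otimes> f \<alpha>) = c \<otimes> ev R gs n f"
proof -
  have "ev R gs n (\<lambda>\<alpha>. c \<otimes> f \<alpha>) = (\<Oplus>\<alpha> \<in> Dg (length gs) n. c \<otimes> (f \<alpha> \<otimes> mnm R gs \<alpha>))"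
    unfolding ev_def
    by (rule add.finprod_cong') (use f c mnm_carr[OF gs] in \<open>auto simp: m_assoc Pi_iff\<close>)
  also have "\<dots> = c \<otimes> ev R gs n f"
    unfolding ev_def
    by (rule finsum_rdistr[symmetric]) (use f c mnm_carr[OF gs] finite_Dg in auto)
  finally show ?thesis .
qed

lemma ev_zero:
  assumes gs: "set gs \<subseteq> carrier R"
  shows "ev R gs n (\<lambda>\<alpha>. \<zero>) = \<zero>"
proof -
  have "ev R gs n (\<lambda>\<alpha>. \<zero>) = (\<Oplus>\<alpha> \<in> Dg (length gs) n. \<zero>)"
    unfolding ev_def
    by (rule add.finprod_cong') (use mnm_carr[OF gs] in auto)
  then show ?thesis by simp
qed

lemma ev_neg:
  assumes gs: "set gs \<subseteq> carrier R" and f: "f \<in> Dg (length gs) n \<rightarrow> carrier R"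
  shows "ev R gs n (\<lambda>\<alpha>. \<ominus> f \<alpha>) = \<ominus> ev R gs n f"
proof -
  have "ev R gs n (\<lambda>\<alpha>. \<ominus> f \<alpha>) = ev R gs n (\<lambda>\<alpha>. (\<ominus> \<one>) \<otimes> f \<alpha>)"
    by (rule ev_cong[OF gs]) (use f in \<open>auto simp: l_minus Pi_iff\<close>)
  also have "\<dots> = (\<ominus> \<one>) \<otimes> ev R gs n f" by (rule ev_scal[OF gs f]) simp
  also have "\<dots> = \<ominus> ev R gs n f" using ev_carr[OF gs f] by (simp add: l_minus)
  finally show ?thesis .
qed

lemma ev_sh:
  assumes gs: "set gs \<subseteq> carrier R" and f: "f \<in> Dg (length gs) n \<rightarrow> carrier R"
    and d: "length \<delta> = length gs"
  shows "ev R gs (n + sum_list \<delta>) (sh R \<delta> f) = mnm R gs \<delta> \<otimes> ev R gs n f"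
proof -
  let ?r = "length gs"
  let ?D = "Dg ?r (n + sum_list \<delta>)"
  let ?A = "(\<lambda>\<alpha>. map2 (+) \<alpha> \<delta>) ` Dg ?r n"
  have Asub: "?A \<subseteq> ?D" using add_in_Dg d by blast
  have out: "sh R \<delta> f \<beta> \<otimes> mnm R gs \<beta> = \<zero>" if "\<beta> \<in> ?D - ?A" for \<beta>
  proof -
    have "\<not> list_all2 (\<le>) \<delta> \<beta>"
    proof
      assume le: "list_all2 (\<le>) \<delta> \<beta>"
      have "map2 (-) \<beta> \<delta> \<in> Dg ?r n" using sub_in_Dg[OF _ le, of ?r "n + sum_list \<delta>"] that by auto
      moreover have "\<beta> = map2 (+) (map2 (-) \<beta> \<delta>) \<delta>" using map2_add_sub[OF le] by simp
      ultimately have "\<beta> \<in> ?A" by blast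
      then show False using that by blast
    qed
    then show ?thesis unfolding sh_def using mnm_carr[OF gs] by simp
  qed
  have h1: "\<And>i. i \<in> ?D - ?A \<Longrightarrow> sh R \<delta> f i \<otimes> mnm R gs i = \<zero>" using out by simp
  have h2: "\<And>x. x \<in> ?A \<Longrightarrow> sh R \<delta> f x \<otimes> mnm R gs x = sh R \<delta> f x \<otimes> mnm R gs x" by simp
  have h3: "(\<lambda>\<beta>. sh R \<delta> f \<beta> \<otimes> mnm R gs \<beta>) \<in> ?D \<rightarrow> carrier R"
  proof
    fix \<beta> assume b: "\<beta> \<in> ?D"
    show "sh R \<delta> f \<beta> \<otimes> mnm R gs \<beta> \<in> carrier R"
    proof (cases "list_all2 (\<le>) \<delta> \<beta>")
      case True
      have "map2 (-) \<beta> \<delta> \<in> Dg ?r n" using sub_in_Dg[OF _ True, of ?r "n + sum_list \<delta>"] b by auto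
      then show ?thesis using True f mnm_carr[OF gs] unfolding sh_def by auto
    next
      case False then show ?thesis using mnm_carr[OF gs] unfolding sh_def by auto
    qed
  qed
  have "ev R gs (n + sum_list \<delta>) (sh R \<delta> f) = (\<Oplus>\<beta> \<in> ?A. sh R \<delta> f \<beta> \<otimes> mnm R gs \<beta>)"
    unfolding ev_def by (rule add.finprod_mono_neutral_cong_right[OF finite_Dg Asub h1 h2 h3])
  also have "\<dots> = (\<Oplus>\<alpha> \<in> Dg ?r n. sh R \<delta> f (map2 (+) \<alpha> \<delta>) \<otimes> mnm R gs (map2 (+) \<alpha> \<delta>))"
  proof (rule finsum_reindex)
    show "(\<lambda>\<beta>. sh R \<delta> f \<beta> \<otimes> mnm R gs \<beta>) \<in> ?A \<rightarrow> carrier R"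
    proof
      fix \<beta> assume "\<beta> \<in> ?A"
      then obtain \<alpha> where a: "\<alpha> \<in> Dg ?r n" "\<beta> = map2 (+) \<alpha> \<delta>" by blast
      have la: "length \<alpha> = length \<delta>" using a d unfolding Dg_def by simp
      have "sh R \<delta> f \<beta> = f \<alpha>"
        unfolding sh_def a(2) using le_map2_add[OF la] map2_sub_add[OF la] by simp
      moreover have "f \<alpha> \<in> carrier R" using funcset_mem[OF f a(1)] .
      ultimately show "sh R \<delta> f \<beta> \<otimes> mnm R gs \<beta> \<in> carrier R"
        using mnm_carr[OF gs] by simp
    qed
    show "inj_on (\<lambda>\<alpha>. map2 (+) \<alpha> \<delta>) (Dg ?r n)"
    proof
      fix a b assume ab: "a \<in> Dg ?r n" "b \<in> Dg ?r n" "map2 (+) a \<delta> = map2 (+) b \<delta>"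
      have "length a = length \<delta>" "length b = length \<delta>" using ab(1,2) d unfolding Dg_def by auto
      then have "a = map2 (-) (map2 (+) a \<delta>) \<delta>" "b = map2 (-) (map2 (+) b \<delta>) \<delta>"
        using map2_sub_add by auto
      then show "a = b" using ab(3) by simp
    qed
  qed
  also have "\<dots> = (\<Oplus>\<alpha> \<in> Dg ?r n. mnm R gs \<delta> \<otimes> (f \<alpha> \<otimes> mnm R gs \<alpha>))"
  proof (rule add.finprod_cong')
    fix \<alpha> assume a: "\<alpha> \<in> Dg ?r n"
    have la: "length \<alpha> = length \<delta>" "length \<alpha> = length gs" using a d unfolding Dg_def by auto
    have "sh R \<delta> f (map2 (+) \<alpha> \<delta>) = f \<alpha>"
      using le_map2_add[OF la(1)] map2_sub_add[OF la(1)] unfolding sh_def by simp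
    moreover have "mnm R gs (map2 (+) \<alpha> \<delta>) = mnm R gs \<alpha> \<otimes> mnm R gs \<delta>"
      by (rule mnm_add[OF gs la(2) d])
    moreover have "f \<alpha> \<in> carrier R" using f a by auto
    ultimately show "sh R \<delta> f (map2 (+) \<alpha> \<delta>) \<otimes> mnm R gs (map2 (+) \<alpha> \<delta>) = mnm R gs \<delta> \<otimes> (f \<alpha> \<otimes> mnm R gs \<alpha>)"
      using mnm_carr[OF gs] by (simp add: m_ac)
  next
    show "(\<lambda>\<alpha>. mnm R gs \<delta> \<otimes> (f \<alpha> \<otimes> mnm R gs \<alpha>)) \<in> Dg ?r n \<rightarrow> carrier R"
      using f mnm_carr[OF gs] by (auto simp: Pi_iff)
  qed simp
  also have "\<dots> = mnm R gs \<delta> \<otimes> ev R gs n f"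
    unfolding ev_def
    by (rule finsum_rdistr[symmetric]) (use f mnm_carr[OF gs] finite_Dg in auto)
  finally show ?thesis .
qed

end

definition uv :: "nat \<Rightarrow> nat \<Rightarrow> nat list" where
  "uv r k = (replicate r 0)[k := 1]"

lemma uv_length [simp]: "length (uv r k) = r" by (simp add: uv_def)

lemma uv_sum: "k < r \<Longrightarrow> sum_list (uv r k) = 1"
proof (induction r arbitrary: k)
  case 0 then show ?case by simp
next
  case (Suc r) then show ?case by (cases k) (auto simp: uv_def)
qed

lemma Dg_0: "Dg r 0 = {replicate r 0}"
proof
  show "Dg r 0 \<subseteq> {replicate r 0}"
  proof
    fix \<alpha> assume "\<alpha> \<in> Dg r 0"
    then have "length \<alpha> = r" "\<forall>x\<in>set \<alpha>. x = 0" unfolding Dg_def by auto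
    then have "\<alpha> = replicate r 0" using replicate_length_same[of \<alpha> 0] by simp
    then show "\<alpha> \<in> {replicate r 0}" by simp
  qed
  show "{replicate r 0} \<subseteq> Dg r 0" unfolding Dg_def by simp
qed

context cring
begin

lemma mnm_zero: "mnm R gs (replicate (length gs) 0) = \<one>"
  by (induction gs) auto

lemma mnm_uv: "set gs \<subseteq> carrier R \<Longrightarrow> k < length gs \<Longrightarrow> mnm R gs (uv (length gs) k) = gs ! k"
proof (induction gs arbitrary: k)
  case Nil then show ?case by simp
next
  case (Cons g gs)
  show ?case
  proof (cases k)
    case 0 then show ?thesis using Cons.prems mnm_zero by (simp add: uv_def)
  next
    case (Suc k')
    then have "uv (length (g # gs)) k = 0 # uv (length gs) k'" by (simp add: uv_def)
    moreover have "gs ! k' \<in> carrier R" using Cons.prems Suc by auto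
    ultimately show ?thesis using Cons Suc by simp
  qed
qed

lemma sh_carr:
  assumes f: "f \<in> Dg r n \<rightarrow> carrier R" and d: "length \<delta> = r"
  shows "sh R \<delta> f \<in> Dg r (n + sum_list \<delta>) \<rightarrow> carrier R"
proof
  fix \<beta> assume b: "\<beta> \<in> Dg r (n + sum_list \<delta>)"
  show "sh R \<delta> f \<beta> \<in> carrier R"
  proof (cases "list_all2 (\<le>) \<delta> \<beta>")
    case True
    have "map2 (-) \<beta> \<delta> \<in> Dg r n" using sub_in_Dg[OF b True] by simp
    then show ?thesis using True funcset_mem[OF f] unfolding sh_def by simp
  qed (simp add: sh_def)
qed

definition Sv :: "'a list \<Rightarrow> nat \<Rightarrow> 'a set" where
  "Sv gs n = {ev R gs n f | f. f \<in> Dg (length gs) n \<rightarrow> carrier R}"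

lemma Sv_add:
  assumes gs: "set gs \<subseteq> carrier R" and "a \<in> Sv gs n" "b \<in> Sv gs n"
  shows "a \<oplus> b \<in> Sv gs n"
proof -
  obtain f g where f: "f \<in> Dg (length gs) n \<rightarrow> carrier R" "a = ev R gs n f"
    and g: "g \<in> Dg (length gs) n \<rightarrow> carrier R" "b = ev R gs n g"
    using assms(2,3) unfolding Sv_def by blast
  have "a \<oplus> b = ev R gs n (\<lambda>\<alpha>. f \<alpha> \<oplus> g \<alpha>)" using ev_add[OF gs f(1) g(1)] f g by simp
  moreover have "(\<lambda>\<alpha>. f \<alpha> \<oplus> g \<alpha>) \<in> Dg (length gs) n \<rightarrow> carrier R"
    using f(1) g(1) by (auto simp: Pi_iff)
  ultimately show ?thesis unfolding Sv_def by blast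
qed

lemma Sv_scal:
  assumes gs: "set gs \<subseteq> carrier R" and "a \<in> Sv gs n" "x \<in> carrier R"
  shows "x \<otimes> a \<in> Sv gs n"
proof -
  obtain f where f: "f \<in> Dg (length gs) n \<rightarrow> carrier R" "a = ev R gs n f"
    using assms(2) unfolding Sv_def by blast
  have "x \<otimes> a = ev R gs n (\<lambda>\<alpha>. x \<otimes> f \<alpha>)" using ev_scal[OF gs f(1) assms(3)] f by simp
  moreover have "(\<lambda>\<alpha>. x \<otimes> f \<alpha>) \<in> Dg (length gs) n \<rightarrow> carrier R"
    using f(1) assms(3) by (auto simp: Pi_iff)
  ultimately show ?thesis unfolding Sv_def by blast
qed

lemma Sv_zero:
  assumes gs: "set gs \<subseteq> carrier R" shows "\<zero> \<in> Sv gs n"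
proof -
  have "\<zero> = ev R gs n (\<lambda>\<alpha>. \<zero>)" using ev_zero[OF gs] by simp
  moreover have "(\<lambda>\<alpha>. \<zero>) \<in> Dg (length gs) n \<rightarrow> carrier R" by simp
  ultimately show ?thesis unfolding Sv_def by blast
qed

lemma Sv_carr:
  assumes gs: "set gs \<subseteq> carrier R" shows "Sv gs n \<subseteq> carrier R"
  unfolding Sv_def using ev_carr[OF gs] by blast

lemma ideal_pow_Sv:
  assumes gs: "set gs \<subseteq> carrier R" and I: "I = Idl (set gs)"
  shows "ideal_pow R I n \<subseteq> Sv gs n"
proof (induction n)
  case 0
  show ?case
  proof
    fix c assume "c \<in> ideal_pow R I 0"
    then have c: "c \<in> carrier R" by simp
    have "ev R gs 0 (\<lambda>\<alpha>. c) = c"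
      unfolding ev_def Dg_0 using c mnm_zero by (simp add: mnm_carr[OF gs])
    moreover have "(\<lambda>\<alpha>. c) \<in> Dg (length gs) 0 \<rightarrow> carrier R" using c by simp
    ultimately show "c \<in> Sv gs 0" unfolding Sv_def by (metis (mono_tags, lifting) mem_Collect_eq)
  qed
next
  case (Suc n)
  have Iid: "ideal I R" using genideal_ideal[OF gs] I by simp
  define Q where "Q = {i \<in> carrier R. \<forall>f \<in> Dg (length gs) n \<rightarrow> carrier R. i \<otimes> ev R gs n f \<in> Sv gs (Suc n)}"
  have Qid: "ideal Q R"
  proof (rule ideal_criterion)
    show "Q \<subseteq> carrier R" unfolding Q_def by blast
    show "\<zero> \<in> Q" unfolding Q_def using ev_carr[OF gs] Sv_zero[OF gs] by simp
    show "a \<oplus> b \<in> Q" if "a \<in> Q" "b \<in> Q" for a b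
      using that ev_carr[OF gs] Sv_add[OF gs] unfolding Q_def by (simp add: l_distr)
    show "x \<otimes> a \<in> Q" if "a \<in> Q" "x \<in> carrier R" for a x
      using that ev_carr[OF gs] Sv_scal[OF gs] unfolding Q_def by (simp add: m_assoc)
  qed
  have gsQ: "set gs \<subseteq> Q"
  proof
    fix g assume g: "g \<in> set gs"
    then obtain k where k: "k < length gs" "g = gs ! k" by (metis in_set_conv_nth)
    have gc: "g \<in> carrier R" using g gs by blast
    have "g \<otimes> ev R gs n f \<in> Sv gs (Suc n)" if f: "f \<in> Dg (length gs) n \<rightarrow> carrier R" for f
    proof -
      have "ev R gs (n + sum_list (uv (length gs) k)) (sh R (uv (length gs) k) f)
            = mnm R gs (uv (length gs) k) \<otimes> ev R gs n f"
        by (rule ev_sh[OF gs f]) simp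
      then have "ev R gs (Suc n) (sh R (uv (length gs) k) f) = g \<otimes> ev R gs n f"
        using mnm_uv[OF gs k(1)] uv_sum[OF k(1)] k(2) gc by simp
      moreover have "sh R (uv (length gs) k) f \<in> Dg (length gs) (Suc n) \<rightarrow> carrier R"
        using sh_carr[OF f, of "uv (length gs) k"] uv_sum[OF k(1)] by simp
      ultimately show ?thesis unfolding Sv_def by (metis (mono_tags, lifting) mem_Collect_eq)
    qed
    then show "g \<in> Q" unfolding Q_def using gc by blast
  qed
  have IQ: "I \<subseteq> Q" unfolding I by (rule genideal_minimal[OF Qid gsQ])
  show ?case
  proof
    fix z assume "z \<in> ideal_pow R I (Suc n)"
    then have "z \<in> ideal_prod R I (ideal_pow R I n)" by simp
    then show "z \<in> Sv gs (Suc n)"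
    proof (induction z rule: ideal_prod.induct)
      case (prod i j)
      obtain f where f: "f \<in> Dg (length gs) n \<rightarrow> carrier R" "j = ev R gs n f"
        using Suc.IH prod(2) unfolding Sv_def by blast
      show ?case using IQ prod(1) f unfolding Q_def by blast
    next
      case (sum s1 s2) then show ?case using Sv_add[OF gs] by blast
    qed
  qed
qed

end

lemma map2_add_comm: "map2 (+) a b = map2 (+) b (a :: nat list)"
proof (induction a arbitrary: b)
  case Nil then show ?case by simp
next
  case (Cons x xs) then show ?case by (cases b) auto
qed

locale gn_setup = ncring R for R (structure) +
  fixes gs :: "'a list" and I :: "'a set" and M :: "nat \<Rightarrow> 'a set"
  assumes gs: "set gs \<subseteq> carrier R" and I: "I = Idl (set gs)"
    and Mid: "\<And>n. ideal (M n) R" and Mpow: "\<And>n. M n \<subseteq> ideal_pow R I n"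
    and Mmul: "\<And>n i z. i \<in> I \<Longrightarrow> z \<in> M n \<Longrightarrow> i \<otimes> z \<in> M (Suc n)"
begin

lemma Iid: "ideal I R" using genideal_ideal[OF gs] I by simp

lemma gsI: "set gs \<subseteq> I" using genideal_self[OF gs] I by simp

lemma Mcarr: "z \<in> M n \<Longrightarrow> z \<in> carrier R" using ideal.Icarr[OF Mid] .

lemma IM: "a \<in> ideal_pow R I j \<Longrightarrow> z \<in> M n \<Longrightarrow> a \<otimes> z \<in> M (n + j)"
proof (induction j arbitrary: a)
  case 0
  have "a \<in> carrier R" using 0(1) by simp
  then show ?case using ideal.I_l_closed[OF Mid 0(2)] by simp
next
  case (Suc j)
  from Suc.prems(1) have "a \<in> ideal_prod R I (ideal_pow R I j)" by simp
  then show ?case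
  proof (induction a rule: ideal_prod.induct)
    case (prod i a')
    have ic: "i \<in> carrier R" using ideal.Icarr[OF Iid prod(1)] .
    have ac: "a' \<in> carrier R" using prod(2) ideal_pow_carr[OF Iid] by blast
    have zc: "z \<in> carrier R" using Mcarr[OF Suc.prems(2)] .
    have "i \<otimes> (a' \<otimes> z) \<in> M (Suc (n + j))" using Mmul[OF prod(1) Suc.IH[OF prod(2) Suc.prems(2)]] .
    then show ?case using ic ac zc by (simp add: m_assoc)
  next
    case (sum s1 s2)
    have c1: "s1 \<in> carrier R" "s2 \<in> carrier R"
      using sum.hyps(1,2) ideal_prod_in_carrier[OF Iid ideal_pow_ideal[OF Iid]] by auto
    have zc: "z \<in> carrier R" using Mcarr[OF Suc.prems(2)] .
    have "s1 \<otimes> z \<oplus> s2 \<otimes> z \<in> M (n + Suc j)"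
      by (rule additive_subgroup.a_closed[OF ideal.axioms(1)[OF Mid] sum.IH(1) sum.IH(2)])
    then show ?case using c1 zc by (simp add: l_distr)
  qed
qed

lemma IM2: "a \<in> ideal_pow R I (Suc j) \<Longrightarrow> z \<in> M n \<Longrightarrow> a \<otimes> z \<in> ideal_prod R I (M (n + j))"
proof -
  assume a: "a \<in> ideal_pow R I (Suc j)" and z: "z \<in> M n"
  from a have "a \<in> ideal_prod R I (ideal_pow R I j)" by simp
  then show ?thesis
  proof (induction a rule: ideal_prod.induct)
    case (prod i a')
    have ic: "i \<in> carrier R" using ideal.Icarr[OF Iid prod(1)] .
    have ac: "a' \<in> carrier R" using prod(2) ideal_pow_carr[OF Iid] by blast
    have zc: "z \<in> carrier R" using Mcarr[OF z] .
    have "i \<otimes> (a' \<otimes> z) \<in> ideal_prod R I (M (n + j))" using ideal_prod.prod[OF prod(1) IM[OF prod(2) z]] .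
    then show ?case using ic ac zc by (simp add: m_assoc)
  next
    case (sum s1 s2)
    have c1: "s1 \<in> carrier R" "s2 \<in> carrier R"
      using sum.hyps(1,2) ideal_prod_in_carrier[OF Iid ideal_pow_ideal[OF Iid]] by auto
    have zc: "z \<in> carrier R" using Mcarr[OF z] .
    have "s1 \<otimes> z \<oplus> s2 \<otimes> z \<in> ideal_prod R I (M (n + j))"
      by (rule ideal_prod.sum[OF sum.IH(1) sum.IH(2)])
    then show ?case using c1 zc by (simp add: l_distr)
  qed
qed

lemma IM3: "ideal_prod R I (M n) \<subseteq> M (Suc n)"
proof
  fix z assume "z \<in> ideal_prod R I (M n)"
  then show "z \<in> M (Suc n)"
  proof (induction z rule: ideal_prod.induct)
    case (prod i j) then show ?case using Mmul by blast
  next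
    case (sum s1 s2) then show ?case using additive_subgroup.a_closed[OF ideal.axioms(1)[OF Mid]] by blast
  qed
qed

definition Pf :: "nat \<Rightarrow> (nat list \<Rightarrow> 'a) set" where
  "Pf m = {f. f \<in> Dg (length gs) m \<rightarrow> carrier R \<and> ev R gs m f \<in> M m}"

definition lead0 :: "nat list \<Rightarrow> nat \<Rightarrow> (nat list \<Rightarrow> 'a) \<Rightarrow> bool" where
  "lead0 \<alpha> m f \<longleftrightarrow> (\<forall>\<beta> \<in> Dg (length gs) m. \<alpha> < \<beta> \<longrightarrow> f \<beta> = \<zero>)"

lemma shift_lead:
  assumes f: "f \<in> Pf m" and a: "\<alpha> \<in> Dg (length gs) m" and l: "lead0 \<alpha> m f"
    and d: "length \<delta> = length gs"
  shows "sh R \<delta> f \<in> Pf (m + sum_list \<delta>)" "sh R \<delta> f (map2 (+) \<alpha> \<delta>) = f \<alpha>"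
    "lead0 (map2 (+) \<alpha> \<delta>) (m + sum_list \<delta>) (sh R \<delta> f)"
proof -
  have fc: "f \<in> Dg (length gs) m \<rightarrow> carrier R" and fM: "ev R gs m f \<in> M m" using f unfolding Pf_def by auto
  have "ev R gs (m + sum_list \<delta>) (sh R \<delta> f) = mnm R gs \<delta> \<otimes> ev R gs m f"
    by (rule ev_sh[OF gs fc d])
  moreover have "mnm R gs \<delta> \<in> ideal_pow R I (sum_list \<delta>)"
    by (rule mnm_in_ideal_pow[OF Iid gsI d])
  ultimately have "ev R gs (m + sum_list \<delta>) (sh R \<delta> f) \<in> M (m + sum_list \<delta>)"
    using IM fM by simp
  then show "sh R \<delta> f \<in> Pf (m + sum_list \<delta>)" unfolding Pf_def using sh_carr[OF fc d] by simp
  have la: "length \<alpha> = length \<delta>" using a d unfolding Dg_def by simp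
  show "sh R \<delta> f (map2 (+) \<alpha> \<delta>) = f \<alpha>"
    unfolding sh_def using le_map2_add[OF la] map2_sub_add[OF la] by simp
  show "lead0 (map2 (+) \<alpha> \<delta>) (m + sum_list \<delta>) (sh R \<delta> f)"
    unfolding lead0_def
  proof (intro ballI impI)
    fix \<beta> assume b: "\<beta> \<in> Dg (length gs) (m + sum_list \<delta>)" and lt: "map2 (+) \<alpha> \<delta> < \<beta>"
    show "sh R \<delta> f \<beta> = \<zero>"
    proof (cases "list_all2 (\<le>) \<delta> \<beta>")
      case True
      let ?b' = "map2 (-) \<beta> \<delta>"
      have b': "?b' \<in> Dg (length gs) m" using sub_in_Dg[OF b True] by simp
      have "map2 (+) ?b' \<delta> = \<beta>" using map2_add_sub[OF True] .
      then have "map2 (+) \<alpha> \<delta> < map2 (+) ?b' \<delta>" using lt by simp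
      moreover have "length ?b' = length \<delta>" using b' d unfolding Dg_def by simp
      ultimately have "\<alpha> < ?b'" using lex_map2_add[OF la] by blast
      then have "f ?b' = \<zero>" using l b' unfolding lead0_def by blast
      then show ?thesis unfolding sh_def using True by simp
    qed (simp add: sh_def)
  qed
qed

definition Lc :: "nat list \<Rightarrow> 'a set" where
  "Lc \<alpha> = {c \<in> carrier R. \<exists>f \<in> Pf (sum_list \<alpha>). f \<alpha> = c \<and> lead0 \<alpha> (sum_list \<alpha>) f}"

lemma Pf_add: "f \<in> Pf m \<Longrightarrow> g \<in> Pf m \<Longrightarrow> (\<lambda>\<beta>. f \<beta> \<oplus> g \<beta>) \<in> Pf m"
proof -
  assume f: "f \<in> Pf m" and g: "g \<in> Pf m"
  have fc: "f \<in> Dg (length gs) m \<rightarrow> carrier R" and gc: "g \<in> Dg (length gs) m \<rightarrow> carrier R"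
    using f g unfolding Pf_def by auto
  have "ev R gs m (\<lambda>\<beta>. f \<beta> \<oplus> g \<beta>) = ev R gs m f \<oplus> ev R gs m g" by (rule ev_add[OF gs fc gc])
  moreover have "ev R gs m f \<oplus> ev R gs m g \<in> M m"
    using f g unfolding Pf_def by (auto intro: additive_subgroup.a_closed[OF ideal.axioms(1)[OF Mid]])
  ultimately show ?thesis unfolding Pf_def using fc gc by (auto simp: Pi_iff)
qed

lemma Pf_scal: "f \<in> Pf m \<Longrightarrow> x \<in> carrier R \<Longrightarrow> (\<lambda>\<beta>. x \<otimes> f \<beta>) \<in> Pf m"
proof -
  assume f: "f \<in> Pf m" and x: "x \<in> carrier R"
  have fc: "f \<in> Dg (length gs) m \<rightarrow> carrier R" using f unfolding Pf_def by auto
  have "ev R gs m (\<lambda>\<beta>. x \<otimes> f \<beta>) = x \<otimes> ev R gs m f" by (rule ev_scal[OF gs fc x])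
  moreover have "x \<otimes> ev R gs m f \<in> M m"
    using f x unfolding Pf_def by (auto intro: ideal.I_l_closed[OF Mid])
  ultimately show ?thesis unfolding Pf_def using fc x by (auto simp: Pi_iff)
qed

lemma Pf_zero: "(\<lambda>\<beta>. \<zero>) \<in> Pf m"
  unfolding Pf_def using ev_zero[OF gs] additive_subgroup.zero_closed[OF ideal.axioms(1)[OF Mid]] by simp

lemma Lc_ideal: "ideal (Lc \<alpha>) R"
proof (rule ideal_criterion)
  show "Lc \<alpha> \<subseteq> carrier R" unfolding Lc_def by blast
  show "\<zero> \<in> Lc \<alpha>" unfolding Lc_def lead0_def using Pf_zero by force
  show "a \<oplus> b \<in> Lc \<alpha>" if ab: "a \<in> Lc \<alpha>" "b \<in> Lc \<alpha>" for a b
  proof -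
    obtain f where f: "f \<in> Pf (sum_list \<alpha>)" "f \<alpha> = a" "lead0 \<alpha> (sum_list \<alpha>) f" and ac: "a \<in> carrier R"
      using ab(1) unfolding Lc_def by blast
    obtain g where g: "g \<in> Pf (sum_list \<alpha>)" "g \<alpha> = b" "lead0 \<alpha> (sum_list \<alpha>) g" and bc: "b \<in> carrier R"
      using ab(2) unfolding Lc_def by blast
    have "lead0 \<alpha> (sum_list \<alpha>) (\<lambda>\<beta>. f \<beta> \<oplus> g \<beta>)" using f(3) g(3) unfolding lead0_def by simp
    then show ?thesis unfolding Lc_def using Pf_add[OF f(1) g(1)] f(2) g(2) ac bc by force
  qed
  show "x \<otimes> a \<in> Lc \<alpha>" if ax: "a \<in> Lc \<alpha>" "x \<in> carrier R" for a x
  proof -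
    obtain f where f: "f \<in> Pf (sum_list \<alpha>)" "f \<alpha> = a" "lead0 \<alpha> (sum_list \<alpha>) f" and ac: "a \<in> carrier R"
      using ax(1) unfolding Lc_def by blast
    have "lead0 \<alpha> (sum_list \<alpha>) (\<lambda>\<beta>. x \<otimes> f \<beta>)" using f(3) ax(2) unfolding lead0_def by simp
    then show ?thesis unfolding Lc_def using Pf_scal[OF f(1) ax(2)] f(2) ac ax(2) by force
  qed
qed

lemma Lc_mono:
  assumes "length \<alpha> = length gs" "length \<alpha>' = length gs" "list_all2 (\<le>) \<alpha> \<alpha>'"
  shows "Lc \<alpha> \<subseteq> Lc \<alpha>'"
proof
  fix c assume "c \<in> Lc \<alpha>"
  then obtain f where f: "f \<in> Pf (sum_list \<alpha>)" "f \<alpha> = c" "lead0 \<alpha> (sum_list \<alpha>) f" and cc: "c \<in> carrier R"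
    unfolding Lc_def by blast
  define \<delta> where "\<delta> = map2 (-) \<alpha>' \<alpha>"
  have ld: "length \<delta> = length gs" unfolding \<delta>_def using length_map2_sub[OF assms(3)] assms by simp
  have a'eq: "map2 (+) \<alpha> \<delta> = \<alpha>'" unfolding \<delta>_def using map2_add_sub[OF assms(3)] map2_add_comm by metis
  have aD: "\<alpha> \<in> Dg (length gs) (sum_list \<alpha>)" unfolding Dg_def using assms by simp
  have sa: "sum_list \<alpha> + sum_list \<delta> = sum_list \<alpha>'"
    using a'eq sum_list_map2_add[of \<alpha> \<delta>] ld assms(1) by simp
  note sl = shift_lead[OF f(1) aD f(3) ld]
  show "c \<in> Lc \<alpha>'" unfolding Lc_def using sl cc f(2) unfolding a'eq sa by blast
qed

end

context gn_setup
begin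

theorem GN: "\<exists>N. \<forall>n\<ge>N. M (Suc n) \<subseteq> ideal_prod R I (M n)"
proof -
  let ?r = "length gs"
  obtain F where F: "finite F" "\<forall>\<gamma>\<in>F. length \<gamma> = ?r"
    "\<And>\<beta>. length \<beta> = ?r \<Longrightarrow> Lc \<beta> \<subseteq> Idl (\<Union>{Lc \<gamma> |\<gamma>. \<gamma> \<in> F \<and> list_all2 (\<le>) \<gamma> \<beta>})"
    using dickson_acc[of ?r, rule_format, of Lc] Lc_ideal Lc_mono by blast
  define N0 where "N0 = Max (insert 0 (sum_list ` F))"
  have N0: "sum_list \<gamma> \<le> N0" if "\<gamma> \<in> F" for \<gamma> unfolding N0_def using F(1) that by simp
  have IPid: "ideal (ideal_prod R I (M n)) R" for n by (rule ideal_prod_is_ideal[OF Iid Mid])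
  have main: "ev R gs (Suc n) f \<in> ideal_prod R I (M n)" if n: "N0 \<le> n" and f: "f \<in> Pf (Suc n)" for n f
  proof -
    let ?m = "Suc n"
    let ?D = "Dg ?r ?m"
    define S where "S f = {\<alpha> \<in> ?D. \<exists>\<beta>\<in>?D. f \<beta> \<noteq> \<zero> \<and> \<alpha> \<le> \<beta>}" for f :: "nat list \<Rightarrow> 'a"
    have finS: "finite (S g)" for g unfolding S_def using finite_Dg by simp
    have "\<forall>g. g \<in> Pf ?m \<longrightarrow> card (S g) = k \<longrightarrow> ev R gs ?m g \<in> ideal_prod R I (M n)" for k
    proof (induction k rule: less_induct)
      case (less k)
      show ?case
      proof (intro allI impI)
        fix g assume g: "g \<in> Pf ?m" and cg: "card (S g) = k"
        have gc: "g \<in> ?D \<rightarrow> carrier R" and gM: "ev R gs ?m g \<in> M ?m" using g unfolding Pf_def by auto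
        show "ev R gs ?m g \<in> ideal_prod R I (M n)"
        proof (cases "\<forall>\<beta>\<in>?D. g \<beta> = \<zero>")
          case True
          have "ev R gs ?m g = ev R gs ?m (\<lambda>\<beta>. \<zero>)" by (rule ev_cong[OF gs]) (use True in auto)
          then show ?thesis using ev_zero[OF gs] additive_subgroup.zero_closed[OF ideal.axioms(1)[OF IPid]] by simp
        next
          case False
          define Z where "Z = {\<beta> \<in> ?D. g \<beta> \<noteq> \<zero>}"
          have Zf: "finite Z" "Z \<noteq> {}" unfolding Z_def using False finite_Dg by auto
          define \<alpha> where "\<alpha> = Max Z"
          have aZ: "\<alpha> \<in> Z" unfolding \<alpha>_def using Max_in[OF Zf] .
          have aD: "\<alpha> \<in> ?D" and ga: "g \<alpha> \<noteq> \<zero>" using aZ unfolding Z_def by auto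
          have la: "length \<alpha> = ?r" and sa: "sum_list \<alpha> = ?m" using aD unfolding Dg_def by auto
          have lead: "lead0 \<alpha> ?m g"
            unfolding lead0_def
          proof (intro ballI impI)
            fix \<beta> assume b: "\<beta> \<in> ?D" "\<alpha> < \<beta>"
            show "g \<beta> = \<zero>"
            proof (rule ccontr)
              assume "g \<beta> \<noteq> \<zero>"
              then have "\<beta> \<in> Z" unfolding Z_def using b by simp
              then have "\<beta> \<le> \<alpha>" unfolding \<alpha>_def using Zf(1) by simp
              then show False using b(2) by simp
            qed
          qed
          have gL: "g \<alpha> \<in> Lc \<alpha>" unfolding Lc_def sa using g lead gc aD by (auto simp: Pi_iff)
          define U where "U = \<Union>{Lc \<gamma> |\<gamma>. \<gamma> \<in> F \<and> list_all2 (\<le>) \<gamma> \<alpha>}"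
          define Qs where "Qs = {c \<in> carrier R. \<exists>h \<in> Pf ?m. h \<alpha> = c \<and> lead0 \<alpha> ?m h \<and>
                               ev R gs ?m h \<in> ideal_prod R I (M n)}"
          have Qid: "ideal Qs R"
          proof (rule ideal_criterion)
            show "Qs \<subseteq> carrier R" unfolding Qs_def by blast
            show "\<zero> \<in> Qs" unfolding Qs_def lead0_def using Pf_zero ev_zero[OF gs]
                additive_subgroup.zero_closed[OF ideal.axioms(1)[OF IPid]] by force
            show "a \<oplus> b \<in> Qs" if ab: "a \<in> Qs" "b \<in> Qs" for a b
            proof -
              obtain h1 where h1: "h1 \<in> Pf ?m" "h1 \<alpha> = a" "lead0 \<alpha> ?m h1" "ev R gs ?m h1 \<in> ideal_prod R I (M n)"
                and ac: "a \<in> carrier R" using ab(1) unfolding Qs_def by blast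
              obtain h2 where h2: "h2 \<in> Pf ?m" "h2 \<alpha> = b" "lead0 \<alpha> ?m h2" "ev R gs ?m h2 \<in> ideal_prod R I (M n)"
                and bc: "b \<in> carrier R" using ab(2) unfolding Qs_def by blast
              have c1: "h1 \<in> ?D \<rightarrow> carrier R" "h2 \<in> ?D \<rightarrow> carrier R" using h1(1) h2(1) unfolding Pf_def by auto
              have "ev R gs ?m (\<lambda>\<beta>. h1 \<beta> \<oplus> h2 \<beta>) = ev R gs ?m h1 \<oplus> ev R gs ?m h2"
                by (rule ev_add[OF gs c1])
              then have "ev R gs ?m (\<lambda>\<beta>. h1 \<beta> \<oplus> h2 \<beta>) \<in> ideal_prod R I (M n)"
                using h1(4) h2(4) additive_subgroup.a_closed[OF ideal.axioms(1)[OF IPid]] by simp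
              moreover have "lead0 \<alpha> ?m (\<lambda>\<beta>. h1 \<beta> \<oplus> h2 \<beta>)" using h1(3) h2(3) unfolding lead0_def by simp
              ultimately show ?thesis unfolding Qs_def using Pf_add[OF h1(1) h2(1)] h1(2) h2(2) ac bc by force
            qed
            show "x \<otimes> a \<in> Qs" if ax: "a \<in> Qs" "x \<in> carrier R" for a x
            proof -
              obtain h1 where h1: "h1 \<in> Pf ?m" "h1 \<alpha> = a" "lead0 \<alpha> ?m h1" "ev R gs ?m h1 \<in> ideal_prod R I (M n)"
                and ac: "a \<in> carrier R" using ax(1) unfolding Qs_def by blast
              have c1: "h1 \<in> ?D \<rightarrow> carrier R" using h1(1) unfolding Pf_def by auto
              have "ev R gs ?m (\<lambda>\<beta>. x \<otimes> h1 \<beta>) = x \<otimes> ev R gs ?m h1"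
                by (rule ev_scal[OF gs c1 ax(2)])
              then have "ev R gs ?m (\<lambda>\<beta>. x \<otimes> h1 \<beta>) \<in> ideal_prod R I (M n)"
                using h1(4) ideal.I_l_closed[OF IPid _ ax(2)] by simp
              moreover have "lead0 \<alpha> ?m (\<lambda>\<beta>. x \<otimes> h1 \<beta>)" using h1(3) ax(2) unfolding lead0_def by simp
              ultimately show ?thesis unfolding Qs_def using Pf_scal[OF h1(1) ax(2)] h1(2) ac ax(2) by force
            qed
          qed
          have UQ: "U \<subseteq> Qs"
          proof
            fix c assume "c \<in> U"
            then obtain \<gamma> where gm: "\<gamma> \<in> F" "list_all2 (\<le>) \<gamma> \<alpha>" "c \<in> Lc \<gamma>" unfolding U_def by blast
            obtain h0 where h0: "h0 \<in> Pf (sum_list \<gamma>)" "h0 \<gamma> = c" "lead0 \<gamma> (sum_list \<gamma>) h0"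
              and cc: "c \<in> carrier R" using gm(3) unfolding Lc_def by blast
            define \<delta> where "\<delta> = map2 (-) \<alpha> \<gamma>"
            have lg: "length \<gamma> = ?r" using F(2) gm(1) by simp
            have ld: "length \<delta> = ?r" unfolding \<delta>_def using length_map2_sub[OF gm(2)] la by simp
            have aeq: "map2 (+) \<gamma> \<delta> = \<alpha>" unfolding \<delta>_def using map2_add_sub[OF gm(2)] map2_add_comm by metis
            have gD: "\<gamma> \<in> Dg ?r (sum_list \<gamma>)" unfolding Dg_def using lg by simp
            have ssum: "sum_list \<gamma> + sum_list \<delta> = ?m"
              using aeq sum_list_map2_add[of \<gamma> \<delta>] ld lg sa by simp
            note sl = shift_lead[OF h0(1) gD h0(3) ld]
            have sg: "sum_list \<gamma> \<le> n" using N0[OF gm(1)] n by simp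
            obtain j where j: "sum_list \<delta> = Suc j" using ssum sg by (metis add_Suc_right le_add_diff_inverse less_Suc_eq_le not_less_eq_eq plus_nat.simps(2) Nat.add_diff_assoc add_diff_cancel_left')
            have eqn: "sum_list \<gamma> + j = n" using ssum j by simp
            have hc: "h0 \<in> Dg ?r (sum_list \<gamma>) \<rightarrow> carrier R" and hM: "ev R gs (sum_list \<gamma>) h0 \<in> M (sum_list \<gamma>)"
              using h0(1) unfolding Pf_def by auto
            have "ev R gs (sum_list \<gamma> + sum_list \<delta>) (sh R \<delta> h0) = mnm R gs \<delta> \<otimes> ev R gs (sum_list \<gamma>) h0"
              by (rule ev_sh[OF gs hc ld])
            moreover have "mnm R gs \<delta> \<in> ideal_pow R I (Suc j)"
              using mnm_in_ideal_pow[OF Iid gsI ld] j by simp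
            ultimately have "ev R gs ?m (sh R \<delta> h0) \<in> ideal_prod R I (M n)"
              using IM2[of _ j, OF _ hM] ssum eqn by metis
            then show "c \<in> Qs" unfolding Qs_def using sl cc h0(2) unfolding aeq ssum by blast
          qed
          have "Lc \<alpha> \<subseteq> Idl U" unfolding U_def using F(3)[OF la] .
          also have "\<dots> \<subseteq> Qs" by (rule genideal_minimal[OF Qid UQ])
          finally have "g \<alpha> \<in> Qs" using gL by blast
          then obtain h where h: "h \<in> Pf ?m" "h \<alpha> = g \<alpha>" "lead0 \<alpha> ?m h" "ev R gs ?m h \<in> ideal_prod R I (M n)"
            unfolding Qs_def by blast
          have hc: "h \<in> ?D \<rightarrow> carrier R" using h(1) unfolding Pf_def by auto
          define g' where "g' = (\<lambda>\<beta>. g \<beta> \<oplus> \<ominus> h \<beta>)"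
          have nhc: "(\<lambda>\<beta>. \<ominus> h \<beta>) \<in> ?D \<rightarrow> carrier R" using hc by (auto simp: Pi_iff)
          have evg': "ev R gs ?m g' = ev R gs ?m g \<oplus> \<ominus> ev R gs ?m h"
            unfolding g'_def using ev_add[OF gs gc nhc] ev_neg[OF gs hc] by simp
          have hM: "ev R gs ?m h \<in> M ?m" using h(1) unfolding Pf_def by auto
          have g'M: "ev R gs ?m g' \<in> M ?m"
            unfolding evg' using gM hM additive_subgroup.a_closed[OF ideal.axioms(1)[OF Mid]]
              additive_subgroup.a_inv_closed[OF ideal.axioms(1)[OF Mid]] by blast
          have g'c: "g' \<in> ?D \<rightarrow> carrier R" unfolding g'_def using gc hc by (auto simp: Pi_iff)
          have g'P: "g' \<in> Pf ?m" unfolding Pf_def using g'M g'c by simp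
          have small: "\<beta> < \<alpha>" if "\<beta> \<in> ?D" "g' \<beta> \<noteq> \<zero>" for \<beta>
          proof (rule ccontr)
            assume "\<not> \<beta> < \<alpha>"
            then have "\<alpha> < \<beta> \<or> \<beta> = \<alpha>" by auto
            then show False
            proof
              assume "\<alpha> < \<beta>"
              then have "g \<beta> = \<zero>" "h \<beta> = \<zero>" using lead h(3) that(1) unfolding lead0_def by auto
              then show False using that(2) unfolding g'_def by simp
            next
              assume "\<beta> = \<alpha>"
              then show False using that(2) h(2) funcset_mem[OF gc aD] unfolding g'_def by (simp add: r_neg)
            qed
          qed
          have sub1: "S g' \<subseteq> {a \<in> ?D. a < \<alpha>}"
          proof
            fix a assume "a \<in> S g'"
            then obtain \<beta> where "a \<in> ?D" "\<beta> \<in> ?D" "g' \<beta> \<noteq> \<zero>" "a \<le> \<beta>" unfolding S_def by blast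
            then show "a \<in> {a \<in> ?D. a < \<alpha>}" using small by fastforce
          qed
          have sub2: "{a \<in> ?D. a < \<alpha>} \<subset> S g"
          proof
            show "{a \<in> ?D. a < \<alpha>} \<subseteq> S g" unfolding S_def using aD ga by fastforce
            have "\<alpha> \<in> S g" unfolding S_def using aD ga by blast
            then show "{a \<in> ?D. a < \<alpha>} \<noteq> S g" by blast
          qed
          have "card (S g') < card (S g)"
            using psubset_card_mono[OF finS] sub1 sub2 by (meson finS card_mono le_less_trans)
          then have "ev R gs ?m g' \<in> ideal_prod R I (M n)" using less.IH cg g'P by blast
          moreover have "ev R gs ?m g = ev R gs ?m g' \<oplus> ev R gs ?m h"
            unfolding evg' using ev_carr[OF gs gc] ev_carr[OF gs hc] by (simp add: a_assoc l_neg)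
          ultimately show ?thesis
            using h(4) additive_subgroup.a_closed[OF ideal.axioms(1)[OF IPid]] by simp
        qed
      qed
    qed
    then show ?thesis using f by blast
  qed
  show ?thesis
  proof (intro exI[of _ N0] allI impI)
    fix n assume n: "N0 \<le> n"
    show "M (Suc n) \<subseteq> ideal_prod R I (M n)"
    proof
      fix z assume z: "z \<in> M (Suc n)"
      then have "z \<in> Sv gs (Suc n)" using Mpow ideal_pow_Sv[OF gs I] by blast
      then obtain f where f: "f \<in> Dg ?r (Suc n) \<rightarrow> carrier R" "z = ev R gs (Suc n) f"
        unfolding Sv_def by blast
      have "f \<in> Pf (Suc n)" unfolding Pf_def using f z by simp
      then show "z \<in> ideal_prod R I (M n)" using main[OF n] f(2) by simp
    qed
  qed
qed

end

context ncring
begin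

corollary GN':
  assumes Iid: "ideal I R" and Mid: "\<And>n. ideal (M n) R" and Mpow: "\<And>n. M n \<subseteq> ideal_pow R I n"
    and Mmul: "\<And>n i z. i \<in> I \<Longrightarrow> z \<in> M n \<Longrightarrow> i \<otimes> z \<in> M (Suc n)"
  shows "\<exists>N. \<forall>n\<ge>N. M (Suc n) \<subseteq> ideal_prod R I (M n)"
proof -
  obtain A where A: "A \<subseteq> carrier R" "finite A" "I = Idl A" using finetely_gen[OF Iid] by blast
  obtain gs where gs: "set gs = A" using finite_list[OF A(2)] by blast
  have nc: "ncring R"
    by (rule ncring.intro[OF is_cring noetherian_ring_axioms])
  have ax: "gn_setup_axioms R gs I M"
  proof (rule gn_setup_axioms.intro)
    show "set gs \<subseteq> carrier R" using A(1) gs by simp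
    show "I = Idl (set gs)" using A(3) gs by simp
  qed (use Mid Mpow Mmul in blast)+
  show ?thesis by (rule gn_setup.GN[OF gn_setup.intro[OF nc ax]])
qed

lemma AR:
  assumes Iid: "ideal I R" and y: "y \<in> carrier R"
  shows "\<exists>N. \<forall>j. \<forall>z \<in> ideal_pow R I (N + j) \<inter> PIdl y. \<exists>w \<in> ideal_pow R I j. z = y \<otimes> w"
proof -
  define M where "M n = ideal_pow R I n \<inter> PIdl y" for n
  have Mid: "ideal (M n) R" for n unfolding M_def by (rule i_intersect[OF ideal_pow_ideal[OF Iid] cgenideal_ideal[OF y]])
  have Mmul: "i \<otimes> z \<in> M (Suc n)" if "i \<in> I" "z \<in> M n" for n i z
  proof -
    have ic: "i \<in> carrier R" using ideal.Icarr[OF Iid that(1)] .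
    from that(2) obtain x where x: "x \<in> carrier R" "z = x \<otimes> y" "z \<in> ideal_pow R I n"
      unfolding M_def cgenideal_def by blast
    have "i \<otimes> z \<in> ideal_pow R I (Suc n)" using ideal_prod.prod[OF that(1) x(3)] by simp
    moreover have "i \<otimes> z = (i \<otimes> x) \<otimes> y" using x ic y by (simp add: m_assoc)
    ultimately show ?thesis unfolding M_def cgenideal_def using ic x(1) by blast
  qed
  have Mpow: "M n \<subseteq> ideal_pow R I n" for n unfolding M_def by blast
  obtain N where N: "\<And>n. N \<le> n \<Longrightarrow> M (Suc n) \<subseteq> ideal_prod R I (M n)"
    using GN'[OF Iid Mid Mpow Mmul] by blast
  have "\<forall>z \<in> M (N + j). \<exists>w \<in> ideal_pow R I j. z = y \<otimes> w" for j
  proof (induction j)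
    case 0
    show ?case
    proof
      fix z assume "z \<in> M (N + 0)"
      then obtain x where "x \<in> carrier R" "z = x \<otimes> y" unfolding M_def cgenideal_def by blast
      then show "\<exists>w \<in> ideal_pow R I 0. z = y \<otimes> w" using y by (auto simp: m_comm)
    qed
  next
    case (Suc j)
    show ?case
    proof
      fix z assume "z \<in> M (N + Suc j)"
      then have "z \<in> ideal_prod R I (M (N + j))" using N[of "N + j"] by auto
      then show "\<exists>w \<in> ideal_pow R I (Suc j). z = y \<otimes> w"
      proof (induction z rule: ideal_prod.induct)
        case (prod i z')
        obtain w where w: "w \<in> ideal_pow R I j" "z' = y \<otimes> w" using Suc.IH prod(2) by blast
        have ic: "i \<in> carrier R" using ideal.Icarr[OF Iid prod(1)] .
        have wc: "w \<in> carrier R" using w(1) ideal_pow_carr[OF Iid] by blast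
        have "i \<otimes> w \<in> ideal_pow R I (Suc j)" using ideal_prod.prod[OF prod(1) w(1)] by simp
        moreover have "i \<otimes> z' = y \<otimes> (i \<otimes> w)" using w(2) ic wc y by (simp add: m_lcomm)
        ultimately show ?case by blast
      next
        case (sum s1 s2)
        obtain w1 where w1: "w1 \<in> ideal_pow R I (Suc j)" "s1 = y \<otimes> w1" using sum.IH(1) by blast
        obtain w2 where w2: "w2 \<in> ideal_pow R I (Suc j)" "s2 = y \<otimes> w2" using sum.IH(2) by blast
        have wc: "w1 \<in> carrier R" "w2 \<in> carrier R" using w1(1) w2(1) ideal_pow_carr[OF Iid] by blast+
        have "w1 \<oplus> w2 \<in> ideal_pow R I (Suc j)"
          by (rule additive_subgroup.a_closed[OF ideal.axioms(1)[OF ideal_pow_ideal[OF Iid]] w1(1) w2(1)])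
        moreover have "s1 \<oplus> s2 = y \<otimes> (w1 \<oplus> w2)" using w1(2) w2(2) wc y by (simp add: r_distr)
        ultimately show ?case by blast
      qed
    qed
  qed
  then show ?thesis unfolding M_def by blast
qed

lemma Hlem:
  assumes Iid: "ideal I R"
  shows "\<exists>N. \<forall>m \<ge> N + k. \<forall>z \<in> ideal_pow R I m.
           (\<forall>u \<in> ideal_pow R I k. z \<otimes> u \<in> ideal_pow R I (m + k + 1)) \<longrightarrow> z \<in> ideal_pow R I (Suc m)"
proof -
  define M where "M n = {z \<in> ideal_pow R I n. \<forall>u \<in> ideal_pow R I k. z \<otimes> u \<in> ideal_pow R I (n + k + 1)}" for n
  have Pid: "ideal (ideal_pow R I n) R" for n by (rule ideal_pow_ideal[OF Iid])
  have Pc: "ideal_pow R I n \<subseteq> carrier R" for n by (rule ideal_pow_carr[OF Iid])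
  have Mid: "ideal (M n) R" for n
  proof (rule ideal_criterion)
    show "M n \<subseteq> carrier R" unfolding M_def using Pc by blast
    have "\<zero> \<otimes> u \<in> ideal_pow R I (n + k + 1)" if "u \<in> ideal_pow R I k" for u
    proof -
      have "u \<in> carrier R" using that Pc by blast
      then have "\<zero> \<otimes> u = \<zero>" by simp
      then show ?thesis using additive_subgroup.zero_closed[OF ideal.axioms(1)[OF Pid[of "n + k + 1"]]] by metis
    qed
    then show "\<zero> \<in> M n" unfolding M_def
      using additive_subgroup.zero_closed[OF ideal.axioms(1)[OF Pid]] by blast
    show "a \<oplus> b \<in> M n" if "a \<in> M n" "b \<in> M n" for a b
    proof -
      have ab: "a \<in> ideal_pow R I n" "b \<in> ideal_pow R I n" using that unfolding M_def by auto
      have "a \<oplus> b \<in> ideal_pow R I n"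
        by (rule additive_subgroup.a_closed[OF ideal.axioms(1)[OF Pid] ab])
      moreover have "(a \<oplus> b) \<otimes> u \<in> ideal_pow R I (n + k + 1)" if u: "u \<in> ideal_pow R I k" for u
      proof -
        have "a \<otimes> u \<oplus> b \<otimes> u \<in> ideal_pow R I (n + k + 1)"
          using that \<open>a \<in> M n\<close> \<open>b \<in> M n\<close> u additive_subgroup.a_closed[OF ideal.axioms(1)[OF Pid]]
          unfolding M_def by blast
        moreover have "a \<in> carrier R" "b \<in> carrier R" "u \<in> carrier R" using ab u Pc by blast+
        ultimately show ?thesis by (simp add: l_distr)
      qed
      ultimately show ?thesis unfolding M_def by blast
    qed
    show "x \<otimes> a \<in> M n" if "a \<in> M n" "x \<in> carrier R" for a x
    proof -
      have a: "a \<in> ideal_pow R I n" using that unfolding M_def by auto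
      have "x \<otimes> a \<in> ideal_pow R I n" using ideal.I_l_closed[OF Pid a that(2)] .
      moreover have "(x \<otimes> a) \<otimes> u \<in> ideal_pow R I (n + k + 1)" if u: "u \<in> ideal_pow R I k" for u
      proof -
        have "a \<otimes> u \<in> ideal_pow R I (n + k + 1)" using \<open>a \<in> M n\<close> u unfolding M_def by blast
        then have "x \<otimes> (a \<otimes> u) \<in> ideal_pow R I (n + k + 1)" using ideal.I_l_closed[OF Pid _ \<open>x \<in> carrier R\<close>] by blast
        moreover have "a \<in> carrier R" "u \<in> carrier R" using a u Pc by blast+
        ultimately show ?thesis using \<open>x \<in> carrier R\<close> by (simp add: m_assoc)
      qed
      ultimately show ?thesis unfolding M_def by blast
    qed
  qed
  have Mmul: "i \<otimes> z \<in> M (Suc n)" if iz: "i \<in> I" "z \<in> M n" for n i z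
  proof -
    have z: "z \<in> ideal_pow R I n" using iz(2) unfolding M_def by auto
    have ic: "i \<in> carrier R" using ideal.Icarr[OF Iid iz(1)] .
    have "i \<otimes> z \<in> ideal_pow R I (Suc n)" using ideal_prod.prod[OF iz(1) z] by simp
    moreover have "(i \<otimes> z) \<otimes> u \<in> ideal_pow R I (Suc n + k + 1)" if u: "u \<in> ideal_pow R I k" for u
    proof -
      have "z \<otimes> u \<in> ideal_pow R I (n + k + 1)" using iz(2) u unfolding M_def by blast
      then have "i \<otimes> (z \<otimes> u) \<in> ideal_pow R I (Suc (n + k + 1))" using ideal_prod.prod[OF iz(1)] by simp
      moreover have "z \<in> carrier R" "u \<in> carrier R" using z u Pc by blast+
      ultimately show ?thesis using ic by (simp add: m_assoc)
    qed
    ultimately show ?thesis unfolding M_def by blast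
  qed
  have Mpow: "M n \<subseteq> ideal_pow R I n" for n unfolding M_def by blast
  obtain N where N: "\<And>n. N \<le> n \<Longrightarrow> M (Suc n) \<subseteq> ideal_prod R I (M n)"
    using GN'[OF Iid Mid Mpow Mmul] by blast
  have C1: "j \<le> k \<Longrightarrow> \<forall>z \<in> M (N + j). \<forall>u \<in> ideal_pow R I (k - j). z \<otimes> u \<in> ideal_pow R I (N + k + 1)" for j
  proof (induction j)
    case 0 then show ?case unfolding M_def by simp
  next
    case (Suc j)
    show ?case
    proof (intro ballI)
      fix z u assume z: "z \<in> M (N + Suc j)" and u: "u \<in> ideal_pow R I (k - Suc j)"
      have uc: "u \<in> carrier R" using u Pc by blast
      from z have "z \<in> ideal_prod R I (M (N + j))" using N[of "N + j"] by auto
      then show "z \<otimes> u \<in> ideal_pow R I (N + k + 1)"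
      proof (induction z rule: ideal_prod.induct)
        case (prod i w)
        have ic: "i \<in> carrier R" using ideal.Icarr[OF Iid prod(1)] .
        have wc: "w \<in> carrier R" using ideal.Icarr[OF Mid prod(2)] .
        have "i \<otimes> u \<in> ideal_pow R I (Suc (k - Suc j))" using ideal_prod.prod[OF prod(1) u] by simp
        moreover have "Suc (k - Suc j) = k - j" using Suc.prems by simp
        ultimately have "w \<otimes> (i \<otimes> u) \<in> ideal_pow R I (N + k + 1)"
          using Suc.IH Suc.prems prod(2) by simp
        then show ?case using ic wc uc by (simp add: m_ac)
      next
        case (sum s1 s2)
        have c: "s1 \<in> carrier R" "s2 \<in> carrier R"
          using sum.hyps(1,2) ideal_prod_in_carrier[OF Iid Mid] by auto
        have "s1 \<otimes> u \<oplus> s2 \<otimes> u \<in> ideal_pow R I (N + k + 1)"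
          by (rule additive_subgroup.a_closed[OF ideal.axioms(1)[OF Pid] sum.IH])
        then show ?case using c uc by (simp add: l_distr)
      qed
    qed
  qed
  have C2: "\<forall>z \<in> M (N + k + d). z \<in> ideal_pow R I (N + k + d + 1)" for d
  proof (induction d)
    case 0
    show ?case
    proof
      fix z assume z: "z \<in> M (N + k + 0)"
      have "z \<otimes> \<one> \<in> ideal_pow R I (N + k + 1)" using C1[of k] z by simp
      moreover have "z \<in> carrier R" using ideal.Icarr[OF Mid z] .
      ultimately show "z \<in> ideal_pow R I (N + k + 0 + 1)" by simp
    qed
  next
    case (Suc d)
    show ?case
    proof
      fix z assume z: "z \<in> M (N + k + Suc d)"
      from z have "z \<in> ideal_prod R I (M (N + k + d))" using N[of "N + k + d"] by auto
      then show "z \<in> ideal_pow R I (N + k + Suc d + 1)"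
      proof (induction z rule: ideal_prod.induct)
        case (prod i w)
        have "w \<in> ideal_pow R I (N + k + d + 1)" using Suc.IH prod(2) by blast
        then show ?case using ideal_prod.prod[OF prod(1)] by simp
      next
        case (sum s1 s2)
        then show ?case using additive_subgroup.a_closed[OF ideal.axioms(1)[OF Pid]] by blast
      qed
    qed
  qed
  show ?thesis
  proof (intro exI[of _ N] allI impI ballI)
    fix m z assume m: "N + k \<le> m" and z: "z \<in> ideal_pow R I m"
      and h: "\<forall>u\<in>ideal_pow R I k. z \<otimes> u \<in> ideal_pow R I (m + k + 1)"
    have "z \<in> M m" unfolding M_def using z h by blast
    then show "z \<in> ideal_pow R I (Suc m)" using C2[of "m - N - k"] m by simp
  qed
qed

end

context ncring
begin

lemma regular_pow:
  assumes reg: "regular_elem R x" and y: "y \<in> carrier R" and e: "x [^] (j::nat) \<otimes> y = \<zero>"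
  shows "y = \<zero>"
  using e y
proof (induction j arbitrary: y)
  case 0 then show ?case by simp
next
  case (Suc j)
  have xc: "x \<in> carrier R" using reg unfolding regular_elem_def by simp
  have "x [^] Suc j \<otimes> y = x \<otimes> (x [^] j \<otimes> y)" using xc Suc.prems(2) by (simp add: m_ac)
  then have "x \<otimes> (x [^] j \<otimes> y) = \<zero>" using Suc.prems(1) by simp
  then have "x [^] j \<otimes> y = \<zero>" using reg xc Suc.prems(2) unfolding regular_elem_def by simp
  then show ?case using Suc.IH Suc.prems(2) by blast
qed

lemma RR:
  assumes Iid: "ideal I R" and x: "x \<in> I" and reg: "regular_elem R x" and b: "b \<in> carrier R"
    and bk: "\<forall>y \<in> ideal_pow R I k. b \<otimes> y \<in> ideal_pow R I (Suc k)"
  shows "\<exists>n0. \<forall>n \<ge> n0. b [^] n \<in> ideal_pow R I n"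
proof -
  have Pid: "ideal (ideal_pow R I n) R" for n by (rule ideal_pow_ideal[OF Iid])
  have Pc: "ideal_pow R I n \<subseteq> carrier R" for n by (rule ideal_pow_carr[OF Iid])
  have xc: "x \<in> carrier R" using ideal.Icarr[OF Iid x] .
  have B1: "\<forall>y \<in> ideal_pow R I (k + d). b \<otimes> y \<in> ideal_pow R I (k + d + 1)" for d
  proof (induction d)
    case 0 then show ?case using bk by simp
  next
    case (Suc d)
    show ?case
    proof
      fix y assume "y \<in> ideal_pow R I (k + Suc d)"
      then have "y \<in> ideal_prod R I (ideal_pow R I (k + d))" by simp
      then show "b \<otimes> y \<in> ideal_pow R I (k + Suc d + 1)"
      proof (induction y rule: ideal_prod.induct)
        case (prod i w)
        have ic: "i \<in> carrier R" using ideal.Icarr[OF Iid prod(1)] .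
        have wc: "w \<in> carrier R" using prod(2) Pc by blast
        have "b \<otimes> w \<in> ideal_pow R I (k + d + 1)" using Suc.IH prod(2) by blast
        then have "i \<otimes> (b \<otimes> w) \<in> ideal_prod R I (ideal_pow R I (k + d + 1))"
          by (rule ideal_prod.prod[OF prod(1)])
        then have "i \<otimes> (b \<otimes> w) \<in> ideal_pow R I (k + Suc d + 1)" by simp
        then show ?case using ic wc b by (simp add: m_lcomm)
      next
        case (sum s1 s2)
        have c: "s1 \<in> carrier R" "s2 \<in> carrier R"
          using sum.hyps(1,2) ideal_prod_in_carrier[OF Iid Pid] by auto
        have "b \<otimes> s1 \<oplus> b \<otimes> s2 \<in> ideal_pow R I (k + Suc d + 1)"
          by (rule additive_subgroup.a_closed[OF ideal.axioms(1)[OF Pid] sum.IH])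
        then show ?case using c b by (simp add: r_distr)
      qed
    qed
  qed
  have B2: "\<forall>d. \<forall>y \<in> ideal_pow R I (k + d). b [^] n \<otimes> y \<in> ideal_pow R I (k + d + n)" for n
  proof (induction n)
    case 0
    show ?case
    proof (intro allI ballI)
      fix d y assume "y \<in> ideal_pow R I (k + d)"
      moreover then have "y \<in> carrier R" using Pc by blast
      ultimately show "b [^] (0::nat) \<otimes> y \<in> ideal_pow R I (k + d + 0)" by simp
    qed
  next
    case (Suc n)
    show ?case
    proof (intro allI ballI)
      fix d y assume y: "y \<in> ideal_pow R I (k + d)"
      have yc: "y \<in> carrier R" using y Pc by blast
      have "b \<otimes> y \<in> ideal_pow R I (k + (d + 1))" using B1 y by simp
      then have "b [^] n \<otimes> (b \<otimes> y) \<in> ideal_pow R I (k + (d + 1) + n)" using Suc.IH by blast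
      moreover have "b [^] Suc n \<otimes> y = b [^] n \<otimes> (b \<otimes> y)" using b yc by (simp add: m_assoc)
      ultimately show "b [^] Suc n \<otimes> y \<in> ideal_pow R I (k + d + Suc n)" by simp
    qed
  qed
  have xkc: "x [^] k \<in> carrier R" using xc by simp
  obtain Na where Na: "\<And>j z. z \<in> ideal_pow R I (Na + j) \<inter> PIdl (x [^] k) \<Longrightarrow>
      \<exists>w \<in> ideal_pow R I j. z = x [^] k \<otimes> w"
    using AR[OF Iid xkc] by blast
  obtain Nh where Nh: "\<And>m z. Nh + k \<le> m \<Longrightarrow> z \<in> ideal_pow R I m \<Longrightarrow>
      (\<forall>u \<in> ideal_pow R I k. z \<otimes> u \<in> ideal_pow R I (m + k + 1)) \<Longrightarrow> z \<in> ideal_pow R I (Suc m)"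
    using Hlem[OF Iid, of k] by blast
  show ?thesis
  proof (intro exI[of _ "Na + Nh + k"] allI impI)
    fix n assume n: "Na + Nh + k \<le> n"
    have bnc: "b [^] n \<in> carrier R" using b by simp
    have xkI: "x [^] k \<in> ideal_pow R I k" by (rule pow_in_ideal_pow[OF Iid x])
    have "b [^] n \<otimes> x [^] k \<in> ideal_pow R I (k + 0 + n)" using B2[of n, rule_format, where d=0 and y="x [^] k"] xkI by simp
    moreover have "k + 0 + n = Na + (n + k - Na)" using n by simp
    ultimately have z1: "b [^] n \<otimes> x [^] k \<in> ideal_pow R I (Na + (n + k - Na))" by metis
    have z2: "b [^] n \<otimes> x [^] k \<in> PIdl (x [^] k)" unfolding cgenideal_def using bnc by blast
    obtain w where w: "w \<in> ideal_pow R I (n + k - Na)" "b [^] n \<otimes> x [^] k = x [^] k \<otimes> w"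
      using Na[OF IntI[OF z1 z2]] by blast
    have wc: "w \<in> carrier R" using w(1) Pc by blast
    have e1: "x [^] k \<otimes> (b [^] n \<ominus> w) = x [^] k \<otimes> b [^] n \<ominus> x [^] k \<otimes> w"
      using bnc wc xkc by (simp add: minus_eq r_distr r_minus)
    have e2: "x [^] k \<otimes> b [^] n = x [^] k \<otimes> w" using w(2) bnc xkc by (simp add: m_comm)
    have "x [^] k \<otimes> (b [^] n \<ominus> w) = \<zero>"
      unfolding e1 e2 using wc xkc by (simp add: minus_eq r_neg)
    then have "b [^] n \<ominus> w = \<zero>" using regular_pow[OF reg] bnc wc by simp
    then have bw: "b [^] n = w" using bnc wc by (simp add: r_right_minus_eq)
    define m0 where "m0 = n + k - Na"
    have m0: "Nh + k \<le> m0" using n unfolding m0_def by simp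
    have bm0: "b [^] n \<in> ideal_pow R I m0" using w(1) bw m0_def by simp
    have climb: "m0 + t \<le> n \<Longrightarrow> b [^] n \<in> ideal_pow R I (m0 + t)" for t
    proof (induction t)
      case 0 then show ?case using bm0 by simp
    next
      case (Suc t)
      let ?m = "m0 + t"
      have hyp: "b [^] n \<in> ideal_pow R I ?m" using Suc by simp
      have "\<forall>u \<in> ideal_pow R I k. b [^] n \<otimes> u \<in> ideal_pow R I (?m + k + 1)"
      proof
        fix u assume "u \<in> ideal_pow R I k"
        then have "b [^] n \<otimes> u \<in> ideal_pow R I (k + 0 + n)"
          using B2[of n, rule_format, where d=0 and y=u] by simp
        moreover have "ideal_pow R I (k + 0 + n) \<subseteq> ideal_pow R I (?m + k + 1)"
          by (rule ideal_pow_anti[OF Iid]) (use Suc.prems in simp)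
        ultimately show "b [^] n \<otimes> u \<in> ideal_pow R I (?m + k + 1)" by blast
      qed
      then have "b [^] n \<in> ideal_pow R I (Suc ?m)" using Nh[of ?m] m0 hyp by simp
      then show ?case by simp
    qed
    show "b [^] n \<in> ideal_pow R I n"
    proof (cases "n \<le> m0")
      case True then show ?thesis using bm0 ideal_pow_anti[OF Iid True] by blast
    next
      case False then show ?thesis using climb[of "n - m0"] by simp
    qed
  qed
qed

end

function cc :: "nat \<Rightarrow> nat \<Rightarrow> int" where
  "cc q n = (if n \<le> q then 0 else -1 - (\<Sum>i\<in>{q+1..<n}. int (n choose i) * cc q i))"
  by auto
termination by (relation "measure (\<lambda>(q, n). n)") auto

declare cc.simps [simp del]

lemma cc_small: "n \<le> q \<Longrightarrow> cc q n = 0" by (subst cc.simps) simp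

lemma cc_sum: assumes "q < n" shows "(\<Sum>i\<in>{1..n}. int (n choose i) * cc q i) = -1"
proof -
  have "(\<Sum>i\<in>{1..n}. int (n choose i) * cc q i) = (\<Sum>i\<in>{1..<n}. int (n choose i) * cc q i) + cc q n"
    using assms by (simp add: atLeastLessThanSuc_atLeastAtMost[symmetric] del: atLeastLessThanSuc_atLeastAtMost)
  also have "(\<Sum>i\<in>{1..<n}. int (n choose i) * cc q i) = (\<Sum>i\<in>{q+1..<n}. int (n choose i) * cc q i)"
  proof (rule sum.mono_neutral_right)
    show "finite {1..<n}" by simp
    show "{q+1..<n} \<subseteq> {1..<n}" by auto
    show "\<forall>i\<in>{1..<n} - {q+1..<n}. int (n choose i) * cc q i = 0" using cc_small by auto
  qed
  also have "cc q n = -1 - (\<Sum>i\<in>{q+1..<n}. int (n choose i) * cc q i)" using assms by (subst cc.simps) simp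
  finally show ?thesis by simp
qed


context cring
begin

lemma finsum_int_pow:
  assumes "finite A" "y \<in> carrier R"
  shows "(\<Oplus>i\<in>A. add_pow R (k i) y) = add_pow R ((\<Sum>i\<in>A. k i)::int) y"
  using assms(1)
proof (induction A rule: finite_induct)
  case empty then show ?case using assms(2) by (simp add: add_pow_def)
next
  case (insert a A)
  have "(\<Oplus>i\<in>insert a A. add_pow R (k i) y) = add_pow R (k a) y \<oplus> (\<Oplus>i\<in>A. add_pow R (k i) y)"
    using insert assms(2) by (simp add: Pi_def)
  also have "\<dots> = add_pow R (k a) y \<oplus> add_pow R ((\<Sum>i\<in>A. k i)::int) y" using insert by simp
  also have "\<dots> = add_pow R (k a + (\<Sum>i\<in>A. k i)) y" using add.int_pow_mult assms(2) by simp
  finally show ?case using insert by simp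
qed

end

context cring
begin

lemma ws_from_powers:
  assumes Iid: "ideal I R" and b: "b \<in> carrier R"
    and hb: "\<And>n. Suc q \<le> n \<Longrightarrow> b [^] n \<in> ideal_pow R I n"
  shows "weakly_subintegral R I b"
proof -
  define a where "a i = add_pow R (cc q i) (b [^] i)" for i
  have Pid: "ideal (ideal_pow R I n) R" for n by (rule ideal_pow_ideal[OF Iid])
  have A1: "a i \<in> ideal_pow R I i" for i
  proof (cases "i \<le> q")
    case True
    then have "a i = \<zero>" unfolding a_def using cc_small[OF True] by (simp add: add_pow_def)
    then show ?thesis using additive_subgroup.zero_closed[OF ideal.axioms(1)[OF Pid]] by simp
  next
    case False
    then have "b [^] i \<in> ideal_pow R I i" using hb by simp
    then show ?thesis unfolding a_def
      using add.subgroup_int_pow_closed[OF additive_subgroup.a_subgroup[OF ideal.axioms(1)[OF Pid]]]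
      by simp
  qed
  have A2: "b [^] n \<oplus> (\<Oplus>i\<in>{1..n}. add_pow R (n choose i) (a i \<otimes> b [^] (n - i))) = \<zero>"
    if n: "q < n" for n
  proof -
    let ?y = "b [^] n"
    have yc: "?y \<in> carrier R" using b by simp
    have t: "add_pow R (n choose i) (a i \<otimes> b [^] (n - i)) = add_pow R (int (n choose i) * cc q i) ?y"
      if i: "i \<in> {1..n}" for i
    proof -
      have "a i \<otimes> b [^] (n - i) = add_pow R (cc q i) (b [^] i \<otimes> b [^] (n - i))"
        unfolding a_def using b by (simp add: add_pow_ldistr_int)
      also have "b [^] i \<otimes> b [^] (n - i) = ?y" using b i by (simp add: nat_pow_mult)
      finally have "a i \<otimes> b [^] (n - i) = add_pow R (cc q i) ?y" .
      moreover have "add_pow R (n choose i) (add_pow R (cc q i) ?y) = add_pow R (int (n choose i) * cc q i) ?y"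
      proof -
        have "add_pow R (n choose i) (add_pow R (cc q i) ?y) = add_pow R (int (n choose i)) (add_pow R (cc q i) ?y)"
          unfolding add_pow_def by (rule int_pow_int[symmetric])
        also have "\<dots> = add_pow R (cc q i * int (n choose i)) ?y" using add.int_pow_pow yc by simp
        finally show ?thesis by (simp add: mult.commute)
      qed
      ultimately show ?thesis by simp
    qed
    have "(\<Oplus>i\<in>{1..n}. add_pow R (n choose i) (a i \<otimes> b [^] (n - i))) =
          (\<Oplus>i\<in>{1..n}. add_pow R (int (n choose i) * cc q i) ?y)"
      by (rule add.finprod_cong') (use t yc in auto)
    also have "\<dots> = add_pow R (\<Sum>i\<in>{1..n}. int (n choose i) * cc q i) ?y"
      by (rule finsum_int_pow) (use yc in auto)
    also have "\<dots> = add_pow R (-1::int) ?y" using cc_sum[OF n] by simp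
    finally have s: "(\<Oplus>i\<in>{1..n}. add_pow R (n choose i) (a i \<otimes> b [^] (n - i))) = add_pow R (-1::int) ?y" .
    have "?y \<oplus> add_pow R (-1::int) ?y = add_pow R (1::int) ?y \<oplus> add_pow R (-1::int) ?y"
      using yc by simp
    also have "\<dots> = add_pow R (1 + -1::int) ?y" by (rule add.int_pow_mult[OF yc, symmetric])
    also have "\<dots> = \<zero>" by (simp add: add_pow_def)
    finally show ?thesis using s by simp
  qed
  show ?thesis
    unfolding weakly_subintegral_def
  proof (intro conjI exI[of _ q] exI[of _ a])
    show "b \<in> carrier R" by (rule b)
    show "\<forall>i\<in>{1..2 * q + 1}. a i \<in> ideal_pow R I i" using A1 by blast
    show "\<forall>n\<in>{q + 1..2 * q + 1}. b [^] n \<oplus> (\<Oplus>i\<in>{1..n}. add_pow R (n choose i) (a i \<otimes> b [^] (n - i))) = \<zero>"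
      using A2 by auto
  qed
qed

end

theorem mainTheorem11:
  fixes R (structure) and I :: "'a set"
  assumes "cring R" and "noetherian_ring R" and "ideal I R"
    and "\<exists>x \<in> I. regular_elem R x"
  shows "ratliff_rush R I \<subseteq> weak_subintegral_closure R I"
proof
  fix b assume "b \<in> ratliff_rush R I"
  then obtain k where b: "b \<in> carrier R" "\<forall>y \<in> ideal_pow R I k. b \<otimes> y \<in> ideal_pow R I (Suc k)"
    unfolding ratliff_rush_def by blast
  interpret ncring R by (rule ncring.intro[OF assms(1,2)])
  obtain x where x: "x \<in> I" "regular_elem R x" using assms(4) by blast
  obtain n0 where n0: "\<And>n. n0 \<le> n \<Longrightarrow> b [^] n \<in> ideal_pow R I n"
    using RR[OF assms(3) x(1) x(2) b(1) b(2)] by blast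
  have "weakly_subintegral R I b"
    by (rule ws_from_powers[OF assms(3) b(1), of n0]) (use n0 in simp)
  then show "b \<in> weak_subintegral_closure R I"
    unfolding weak_subintegral_closure_def using b(1) by blast
qed

end
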